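(* Let $P$ satisfy (P1)–(P3), let $\theta\ge0$, and let $d(s)=2+\frac{sk''(s)}{k'(s)}$. Suppose $x:[0,\infty)\to[0,\infty)$ is measurable and locally integrable and satisfies, for some $C>0$, $$x(t)\le Ct^\theta+\frac1t\int_0^td(s)x(s)\,ds\qquad\text{for all }t\ge\rho^*.$$ Then there is $\tilde C>0$ independent of $t$ such that for all $t\ge\rho^*$: $x(t)\le\tilde Ct^{\theta_2}$ if $0\le\theta<\theta_2$; $x(t)\le\tilde Ct^{\theta_2}\ln t$ if $\theta=\theta_2$; and $x(t)\le\tilde Ct^\theta$ if $\theta>\theta_2$. Moreover, if instead $x(t)\le Ct^\theta\ln t+\frac1t\int_0^td(s)x(s)ds$ for $t\ge\rho^*$ with $\theta>\theta_2$, then $x(t)\le\tilde Ct^\theta\ln t$ for $t\ge\rho^*$.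
   Context: (P1) $P\in C^1([0,\infty))\cap C^4((0,\infty))$, $P'>0$, $2P'+\rho P''>0$ for $\rho>0$. (P2) $P=\kappa_1\rho^{\gamma_1}(1+\mathcal P_1)$ on $[0,\rho_* )$, $\gamma_1\in(1,3)$, $|\mathcal P_1^{(j)}|\le C_*\rho^{\gamma_1-1-j}$, $j\le4$. (P3) $P=\kappa_2\rho^{\gamma_2}(1+\mathcal P_2)$ on $[\rho^*,\infty)$, $\rho^*>\rho_*$ (taken sufficiently large), $\gamma_2\in(\frac65,\gamma_1]$, $|\mathcal P_2^{(j)}|\le C^*\rho^{-\epsilon-j}$, $j\le4$, $\epsilon>0$. $k(\rho)=\int_0^\rho\sqrt{P'(y)}/y\,dy$, $\theta_2=\frac{\gamma_2-1}2$. *)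

theory Defs
  imports "HOL-Analysis.Analysis"
begin

definition P1 :: "(real \<Rightarrow> real) \<Rightarrow> bool" where
  "P1 P \<longleftrightarrow>
     (\<exists>P'. continuous_on {0..} P' \<and> (\<forall>r\<ge>0. (P has_real_derivative P' r) (at r within {0..}))) \<and>
     (\<forall>j<4. \<forall>r>0. (deriv ^^ j) P differentiable at r) \<and>
     continuous_on {0<..} ((deriv ^^ 4) P) \<and>
     (\<forall>r>0. deriv P r > 0) \<and>
     (\<forall>r>0. 2 * deriv P r + r * deriv (deriv P) r > 0)"

definition P2 :: "(real \<Rightarrow> real) \<Rightarrow> real \<Rightarrow> real \<Rightarrow> real \<Rightarrow> real \<Rightarrow> (real \<Rightarrow> real) \<Rightarrow> bool" where
  "P2 P rho_lo kappa1 gamma1 Clo calP1 \<longleftrightarrow>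
     0 < rho_lo \<and> 1 < gamma1 \<and> gamma1 < 3 \<and>
     (\<forall>\<rho>. 0 \<le> \<rho> \<and> \<rho> < rho_lo \<longrightarrow> P \<rho> = kappa1 * \<rho> powr gamma1 * (1 + calP1 \<rho>)) \<and>
     (\<forall>j\<le>4. \<forall>\<rho>. 0 < \<rho> \<and> \<rho> < rho_lo \<longrightarrow>
        \<bar>(deriv ^^ j) calP1 \<rho>\<bar> \<le> Clo * \<rho> powr (gamma1 - 1 - real j))"

definition P3 :: "(real \<Rightarrow> real) \<Rightarrow> real \<Rightarrow> real \<Rightarrow> real \<Rightarrow> real \<Rightarrow> (real \<Rightarrow> real) \<Rightarrow> real \<Rightarrow> real \<Rightarrow> bool" where
  "P3 P rho_hi kappa2 gamma2 Chi calP2 eps gamma1 \<longleftrightarrow>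
     6/5 < gamma2 \<and> gamma2 \<le> gamma1 \<and> 0 < eps \<and>
     (\<forall>\<rho>\<ge>rho_hi. P \<rho> = kappa2 * \<rho> powr gamma2 * (1 + calP2 \<rho>)) \<and>
     (\<forall>j\<le>4. \<forall>\<rho>>rho_hi. \<bar>(deriv ^^ j) calP2 \<rho>\<bar> \<le> Chi * \<rho> powr (- eps - real j))"

definition kfun :: "(real \<Rightarrow> real) \<Rightarrow> real \<Rightarrow> real" where
  "kfun P \<rho> = (LBINT y=0..\<rho>. sqrt (deriv P y) / y)"

definition dfun :: "(real \<Rightarrow> real) \<Rightarrow> real \<Rightarrow> real" where
  "dfun P s = 2 + s * deriv (deriv (kfun P)) s / deriv (kfun P) s"

end

theory Submission
  imports Defs
begin


lemma setint_cont_mult: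
  fixes D x :: "real \<Rightarrow> real"
  assumes "continuous_on {a..b} D" "set_integrable lborel {a..b} x"
  shows "set_integrable lborel {a..b} (\<lambda>s. D s * x s)"
proof -
  have "compact (D ` {a..b})" using assms(1) compact_continuous_image by blast
  then obtain M where M: "\<And>s. s \<in> {a..b} \<Longrightarrow> \<bar>D s\<bar> \<le> M"
    by (metis bounded_iff compact_imp_bounded image_eqI real_norm_def)
  have m1: "(\<lambda>s. indicator {a..b} s *\<^sub>R D s) \<in> borel_measurable lborel"
    using borel_measurable_continuous_on_indicator[OF _ assms(1)] by simp
  have m2: "(\<lambda>s. indicator {a..b} s *\<^sub>R x s) \<in> borel_measurable lborel"
    using assms(2) unfolding set_integrable_def by (rule borel_measurable_integrable)
  have "(\<lambda>s. (indicator {a..b} s *\<^sub>R D s) * (indicator {a..b} s *\<^sub>R x s)) \<in> borel_measurable lborel"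
    using m1 m2 by measurable
  moreover have "(\<lambda>s. (indicator {a..b} s *\<^sub>R D s) * (indicator {a..b} s *\<^sub>R x s)) = (\<lambda>s. indicator {a..b} s *\<^sub>R (D s * x s))"
    by (auto simp: indicator_def)
  ultimately have m: "set_borel_measurable lborel {a..b} (\<lambda>s. D s * x s)"
    unfolding set_borel_measurable_def by simp
  show ?thesis
  proof (rule set_integrable_bound[OF _ m])
    show "set_integrable lborel {a..b} (\<lambda>s. M * x s)" using assms(2) by simp
    show "AE s in lborel. s \<in> {a..b} \<longrightarrow> norm (D s * x s) \<le> norm (M * x s)"
    proof (intro AE_I2 impI)
      fix s assume "s \<in> {a..b}"
      then have "\<bar>D s\<bar> \<le> \<bar>M\<bar>" using M by force
      then show "norm (D s * x s) \<le> norm (M * x s)" by (simp add: abs_mult mult_right_mono)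
    qed
  qed
qed

lemma setint_nonneg:
  fixes g :: "real \<Rightarrow> real"
  assumes "\<And>s. s \<in> A \<Longrightarrow> 0 \<le> g s"
  shows "0 \<le> (LINT s:A|M. g s)"
  unfolding set_lebesgue_integral_def
  using assms by (auto intro!: Bochner_Integration.integral_nonneg simp: indicator_def)

lemma setint_dom_mono:
  fixes g :: "real \<Rightarrow> real"
  assumes "set_integrable lborel {a..b} g" "\<And>s. s \<in> {a..b} \<Longrightarrow> 0 \<le> g s" "c \<le> b"
  shows "(LINT s:{a..c}|lborel. g s) \<le> (LINT s:{a..b}|lborel. g s)"
proof -
  have i2: "set_integrable lborel {a..c} g"
    by (rule set_integrable_subset[OF assms(1)]) (use assms(3) in auto)
  show ?thesis
    unfolding set_lebesgue_integral_def
    apply (rule integral_mono)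
    using i2 assms(1) apply (auto simp: set_integrable_def)[2]
    using assms(2,3) by (auto simp: indicator_def)
qed

lemma comparison:
  fixes x D w f :: "real \<Rightarrow> real"
  assumes R: "0 < R" and K: "0 \<le> K"
   and xnn: "\<And>t. t \<ge> R \<Longrightarrow> 0 \<le> x t"
   and xint: "\<And>t. t \<ge> R \<Longrightarrow> set_integrable lborel {R..t} x"
   and Dc: "continuous_on {R..} D" and Dnn: "\<And>t. t \<ge> R \<Longrightarrow> 0 \<le> D t"
   and wc: "continuous_on {R..} w" and wpos: "\<And>t. t \<ge> R \<Longrightarrow> 0 < w t"
   and fc: "continuous_on {R..} f" and fpos: "\<And>t. t \<ge> R \<Longrightarrow> 0 < f t"
   and hx: "\<And>t. t \<ge> R \<Longrightarrow> x t \<le> f t + K/t + (1/t) * (LINT s:{R..t}|lborel. D s * x s)"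
   and hw: "\<And>t. t \<ge> R \<Longrightarrow> f t + K/t + (1/t) * (LINT s:{R..t}|lborel. D s * w s) \<le> w t"
   and T: "R \<le> T"
  shows "x T \<le> w T"
proof -
  let ?S = "{R..T}"
  have cS: "compact ?S" "?S \<noteq> {}" using T by auto
  have DcS: "continuous_on {R..s} D" for s using Dc by (rule continuous_on_subset) auto
  have wcS: "continuous_on {R..s} w" for s using wc by (rule continuous_on_subset) auto
  have fcS: "continuous_on ?S f" using fc by (rule continuous_on_subset) auto
  have intDx: "set_integrable lborel {R..s} (\<lambda>u. D u * x u)" if "s \<ge> R" for s
    using setint_cont_mult[OF DcS xint[OF that]] .
  have intw: "set_integrable lborel {R..s} w" for s
    using borel_integrable_compact[OF _ wcS] unfolding set_integrable_def by simp
  have intDw: "set_integrable lborel {R..s} (\<lambda>u. D u * w u)" for s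
    using setint_cont_mult[OF DcS intw] .
  obtain fm where fm: "\<And>s. s \<in> ?S \<Longrightarrow> f s \<le> fm"
    using continuous_attains_sup[OF cS fcS] by blast
  have "continuous_on ?S (\<lambda>s. f s / w s)"
    using fcS wcS wpos by (intro continuous_intros) (auto, metis less_irrefl)
  then obtain s0 where s0: "s0 \<in> ?S" "\<And>s. s \<in> ?S \<Longrightarrow> f s0 / w s0 \<le> f s / w s"
    using continuous_attains_inf[OF cS] by blast
  define \<delta> where "\<delta> = f s0 / w s0"
  have \<delta>pos: "0 < \<delta>" unfolding \<delta>_def using s0 fpos wpos by auto
  obtain s1 where s1: "s1 \<in> ?S" "\<And>s. s \<in> ?S \<Longrightarrow> w s1 \<le> w s"
    using continuous_attains_inf[OF cS wcS] by blast
  have ws1: "w s1 > 0" using s1 wpos by auto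
  define IT where "IT = (LINT u:{R..T}|lborel. D u * x u)"
  have xb: "x s \<le> fm + K/R + (1/R) * IT" if "s \<in> ?S" for s
  proof -
    have sR: "s \<ge> R" using that by auto
    have I0: "0 \<le> (LINT u:{R..s}|lborel. D u * x u)"
      by (rule setint_nonneg) (use Dnn xnn in auto)
    have I1: "(LINT u:{R..s}|lborel. D u * x u) \<le> IT"
      unfolding IT_def by (rule setint_dom_mono[OF intDx[OF T]]) (use Dnn xnn that in auto)
    have "(1/s) * (LINT u:{R..s}|lborel. D u * x u) \<le> (1/R) * IT"
    proof -
      have "(1/s) * (LINT u:{R..s}|lborel. D u * x u) \<le> (1/R) * (LINT u:{R..s}|lborel. D u * x u)"
        using I0 sR R by (intro mult_right_mono) (auto simp: frac_le)
      also have "\<dots> \<le> (1/R) * IT" using I1 R by (intro mult_left_mono) auto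
      finally show ?thesis .
    qed
    moreover have "K/s \<le> K/R" using K sR R by (simp add: frac_le)
    ultimately show ?thesis using hx[OF sR] fm[OF that] by linarith
  qed
  define B where "B = fm + K/R + (1/R) * IT"
  define u where "u = Sup ((\<lambda>s. x s / w s) ` ?S)"
  have bdd: "bdd_above ((\<lambda>s. x s / w s) ` ?S)"
  proof (rule bdd_aboveI2)
    fix s assume s: "s \<in> ?S"
    have "x s / w s \<le> \<bar>B\<bar> / w s" using xb[OF s] wpos[of s] s unfolding B_def
      by (intro divide_right_mono) auto
    also have "\<dots> \<le> \<bar>B\<bar> / w s1" using s1(2)[OF s] ws1 by (intro divide_left_mono) auto
    finally show "x s / w s \<le> \<bar>B\<bar> / w s1" .
  qed
  have ule: "x s / w s \<le> u" if "s \<in> ?S" for s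
    unfolding u_def using bdd that by (rule cSUP_upper2) simp
  have xu: "x s \<le> u * w s" if "s \<in> ?S" for s
    using ule[OF that] wpos[of s] that by (auto simp: divide_le_eq)
  have u0: "0 \<le> u"
  proof -
    have "0 \<le> x R / w R" using xnn[of R] wpos[of R] by simp
    also have "\<dots> \<le> u" using ule[of R] T by simp
    finally show ?thesis .
  qed
  have u1: "u \<le> 1"
  proof (rule ccontr)
    assume "\<not> u \<le> 1"
    then have ug: "u > 1" by simp
    have "x s / w s \<le> u - (u - 1) * \<delta>" if s: "s \<in> ?S" for s
    proof -
      have sR: "s \<ge> R" and ws: "w s > 0" using s wpos by auto
      have sp: "s > 0" using sR R by simp
      define J where "J = (LINT v:{R..s}|lborel. D v * w v)"
      have "(LINT v:{R..s}|lborel. D v * x v) \<le> (LINT v:{R..s}|lborel. u * (D v * w v))"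
      proof (rule set_integral_mono[OF intDx[OF sR]])
        show "set_integrable lborel {R..s} (\<lambda>v. u * (D v * w v))" using intDw by simp
        fix v assume "v \<in> {R..s}"
        then have "v \<in> ?S" "v \<ge> R" using s by auto
        then show "D v * x v \<le> u * (D v * w v)"
          using xu Dnn by (metis mult.left_commute mult_left_mono)
      qed
      also have "\<dots> = u * J" unfolding J_def by simp
      finally have IJ: "(LINT v:{R..s}|lborel. D v * x v) \<le> u * J" .
      have hws: "f s + K/s + (1/s) * J \<le> w s" using hw[OF sR] unfolding J_def .
      have "x s \<le> f s + K/s + (1/s) * (u * J)"
        using hx[OF sR] IJ sp by (smt (verit) divide_pos_pos mult_left_mono)
      also have "\<dots> = f s + K/s + u * ((1/s) * J)" by simp
      also have "\<dots> \<le> f s + K/s + u * (w s - f s - K/s)"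
        using hws u0 by (intro add_left_mono mult_left_mono) auto
      also have "\<dots> = u * w s - (u - 1) * (f s + K/s)" by (simp add: algebra_simps add_divide_distrib[symmetric])
      also have "\<dots> \<le> u * w s - (u - 1) * (\<delta> * w s)"
      proof -
        have "\<delta> \<le> f s / w s" unfolding \<delta>_def using s0(2)[OF s] .
        then have "\<delta> * w s \<le> f s" using ws by (simp add: le_divide_eq)
        moreover have "0 \<le> K/s" using K sp by simp
        ultimately show ?thesis using ug by (intro diff_left_mono mult_left_mono) auto
      qed
      finally have "x s \<le> (u - (u - 1) * \<delta>) * w s" by (simp add: algebra_simps)
      then show ?thesis using ws by (simp add: divide_le_eq)
    qed
    then have "u \<le> u - (u - 1) * \<delta>" unfolding u_def
      using cS(2) by (intro cSUP_least) auto
    then show False using ug \<delta>pos by (smt (verit) mult_pos_pos)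
  qed
  have "x T \<le> u * w T" using xu T by auto
  also have "\<dots> \<le> w T" using u1 wpos[OF T] by (simp add: mult_le_cancel_right1)
  finally show ?thesis .
qed

lemma supersol:
  fixes w f D h f1 :: "real \<Rightarrow> real"
  assumes R: "0 < R"
   and dw: "\<And>s. s \<ge> R \<Longrightarrow> ((\<lambda>s. s * w s) has_real_derivative (D s * w s + h s)) (at s)"
   and df: "\<And>s. s \<ge> R \<Longrightarrow> ((\<lambda>s. s * f s) has_real_derivative f1 s) (at s)"
   and hf: "\<And>s. s \<ge> R \<Longrightarrow> f1 s \<le> h s"
   and Dwc: "continuous_on {R..} (\<lambda>s. D s * w s)"
   and init: "K \<le> R * w R - R * f R"
   and t: "R \<le> t"
  shows "f t + K/t + (1/t) * (LINT s:{R..t}|lborel. D s * w s) \<le> w t"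
proof -
  have c: "continuous_on {R..t} (\<lambda>s. D s * w s)" using Dwc by (rule continuous_on_subset) auto
  have si: "set_integrable lborel {R..t} (\<lambda>s. D s * w s)"
    using borel_integrable_compact[OF _ c] unfolding set_integrable_def by simp
  define J where "J = (LINT s:{R..t}|lborel. D s * w s)"
  have hJ: "((\<lambda>s. D s * w s) has_integral J) {R..t}"
    using set_borel_integral_eq_integral[OF si] unfolding J_def
    by (simp add: integrable_integral)
  have F1: "((\<lambda>s. D s * w s + h s) has_integral (t * w t - R * w R)) {R..t}"
    apply (rule fundamental_theorem_of_calculus[OF t])
    using dw by (auto simp: has_real_derivative_iff_has_vector_derivative[symmetric]
        intro: has_field_derivative_at_within)
  have F2: "(f1 has_integral (t * f t - R * f R)) {R..t}"
    apply (rule fundamental_theorem_of_calculus[OF t])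
    using df by (auto simp: has_real_derivative_iff_has_vector_derivative[symmetric]
        intro: has_field_derivative_at_within)
  have "((\<lambda>s. (D s * w s + h s) - D s * w s) has_integral (t * w t - R * w R - J)) {R..t}"
    by (rule has_integral_diff[OF F1 hJ])
  then have F3: "(h has_integral (t * w t - R * w R - J)) {R..t}" by simp
  have "t * f t - R * f R \<le> t * w t - R * w R - J"
    by (rule has_integral_le[OF F2 F3]) (use hf in auto)
  then have "J \<le> t * (w t - f t) - K" using init by (simp add: algebra_simps)
  then have "(1/t) * J \<le> (1/t) * (t * (w t - f t) - K)"
    using R t by (intro mult_left_mono) auto
  also have "\<dots> = w t - f t - K/t" using R t by (simp add: field_simps)
  finally show ?thesis unfolding J_def by simp
qed




lemma dE:
  assumes s: "0 < s" and eps: "0 < \<epsilon>"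
  shows "((\<lambda>s. exp (-(c/\<epsilon>) * s powr (-\<epsilon>))) has_real_derivative
     (c * s powr (-\<epsilon>) / s) * exp (-(c/\<epsilon>) * s powr (-\<epsilon>))) (at s)"
proof -
  have "((\<lambda>s. exp (-(c/\<epsilon>) * s powr (-\<epsilon>))) has_real_derivative
     exp (-(c/\<epsilon>) * s powr (-\<epsilon>)) * (-(c/\<epsilon>) * ((-\<epsilon>) * s powr (-\<epsilon> - 1)))) (at s)"
    by (intro DERIV_chain2[OF DERIV_exp] DERIV_cmult has_real_derivative_powr s)
  moreover have "s powr (-\<epsilon> - 1) = s powr (-\<epsilon>) / s" using s by (simp add: powr_diff)
  ultimately show ?thesis using eps by (simp add: field_simps)
qed

lemma dW:
  fixes g :: "real \<Rightarrow> real"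
  assumes s: "0 < s" and eps: "0 < \<epsilon>" and dg: "(g has_real_derivative g1) (at s)"
  shows "((\<lambda>s. s * (s powr a * exp (-(c/\<epsilon>) * s powr (-\<epsilon>)) * g s)) has_real_derivative
     ((1 + a + c * s powr (-\<epsilon>)) * (s powr a * exp (-(c/\<epsilon>) * s powr (-\<epsilon>)) * g s)
       + s powr (1+a) * exp (-(c/\<epsilon>) * s powr (-\<epsilon>)) * g1)) (at s)"
proof -
  let ?E = "\<lambda>s. exp (-(c/\<epsilon>) * s powr (-\<epsilon>))"
  note d = DERIV_mult[OF DERIV_ident DERIV_mult[OF DERIV_mult[OF has_real_derivative_powr[OF s, of a] dE[OF s eps, of c]] dg]]
  have e2: "s powr (a - 1) = s powr a / s" using s by (simp add: powr_diff)
  have e3: "s powr (1 + a) = s powr a * s" using s by (simp add: powr_add)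
  show ?thesis apply (rule DERIV_cong[OF d]) using s by (simp add: e2 e3 field_simps)
qed
lemma bound_generic:
  fixes x f g g1 f1 :: "real \<Rightarrow> real"
  assumes R: "0 < R" and eps: "0 < \<epsilon>" and c: "0 \<le> c" and a: "0 \<le> a" and K: "0 \<le> K"
   and xnn: "\<And>t. t \<ge> R \<Longrightarrow> 0 \<le> x t"
   and xint: "\<And>t. t \<ge> R \<Longrightarrow> set_integrable lborel {R..t} x"
   and hx: "\<And>t. t \<ge> R \<Longrightarrow> x t \<le> f t + K/t + (1/t) * (LINT s:{R..t}|lborel. (1 + a + c * s powr (-\<epsilon>)) * x s)"
   and dg: "\<And>s. s \<ge> R \<Longrightarrow> (g has_real_derivative g1 s) (at s)"
   and gpos: "\<And>s. s \<ge> R \<Longrightarrow> 0 < g s"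
   and df: "\<And>s. s \<ge> R \<Longrightarrow> ((\<lambda>s. s * f s) has_real_derivative f1 s) (at s)"
   and hf: "\<And>s. s \<ge> R \<Longrightarrow> f1 s \<le> s powr (1+a) * exp (-(c/\<epsilon>) * s powr (-\<epsilon>)) * g1 s"
   and fc: "continuous_on {R..} f" and fpos: "\<And>t. t \<ge> R \<Longrightarrow> 0 < f t"
   and init: "K \<le> R * (R powr a * exp (-(c/\<epsilon>) * R powr (-\<epsilon>)) * g R) - R * f R"
   and T: "R \<le> T"
  shows "x T \<le> T powr a * exp (-(c/\<epsilon>) * T powr (-\<epsilon>)) * g T"
proof -
  define E where "E = (\<lambda>s::real. exp (-(c/\<epsilon>) * s powr (-\<epsilon>)))"
  define w where "w = (\<lambda>s. s powr a * E s * g s)"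
  define D where "D = (\<lambda>s::real. 1 + a + c * s powr (-\<epsilon>))"
  have gc: "continuous_on {R..} g"
    by (rule continuous_at_imp_continuous_on) (use dg DERIV_isCont in auto)
  have pc: "continuous_on {R..} (\<lambda>s::real. s powr b)" for b
    by (rule continuous_at_imp_continuous_on) (use R in \<open>auto intro!: continuous_intros\<close>)
  have Dc: "continuous_on {R..} D" unfolding D_def using pc R by (intro continuous_intros) auto
  have Ec: "continuous_on {R..} E" unfolding E_def using pc R by (intro continuous_intros) auto
  have wc: "continuous_on {R..} w" unfolding w_def using pc Ec gc R by (intro continuous_intros) auto
  have "x T \<le> w T"
  proof (rule comparison[OF R K xnn xint Dc _ wc _ fc fpos _ _ T])
    show "0 \<le> D t" if "t \<ge> R" for t unfolding D_def using a c by simp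
    show "0 < w t" if "t \<ge> R" for t unfolding w_def E_def using gpos[OF that] R that by simp
    show "x t \<le> f t + K/t + (1/t) * (LINT s:{R..t}|lborel. D s * x s)" if "t \<ge> R" for t
      using hx[OF that] unfolding D_def .
    show "f t + K/t + (1/t) * (LINT s:{R..t}|lborel. D s * w s) \<le> w t" if "t \<ge> R" for t
    proof (rule supersol[OF R _ df _ _ _ that])
      show "((\<lambda>s. s * w s) has_real_derivative (D s * w s + s powr (1+a) * E s * g1 s)) (at s)" if "s \<ge> R" for s
        unfolding w_def D_def E_def using dW[OF _ eps dg[OF that], of a c] R that by simp
      show "f1 s \<le> s powr (1+a) * E s * g1 s" if "s \<ge> R" for s using hf[OF that] unfolding E_def .
      show "continuous_on {R..} (\<lambda>s. D s * w s)" using Dc wc by (intro continuous_intros)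
      show "K \<le> R * w R - R * f R" using init unfolding w_def E_def .
    qed
  qed
  then show ?thesis unfolding w_def E_def .
qed

lemma E_bounds:
  fixes s \<epsilon> c :: real
  assumes s: "1 \<le> s" and eps: "0 < \<epsilon>" and c: "0 \<le> c"
  shows "exp (-(c/\<epsilon>)) \<le> exp (-(c/\<epsilon>) * s powr (-\<epsilon>))" "exp (-(c/\<epsilon>) * s powr (-\<epsilon>)) \<le> 1"
proof -
  have "1 \<le> s powr \<epsilon>" using ge_one_powr_ge_zero[of s \<epsilon>] s eps by simp
  then have p: "s powr (-\<epsilon>) \<le> 1" "0 \<le> s powr (-\<epsilon>)" using s by (auto simp: powr_minus_divide)
  have "c/\<epsilon> \<ge> 0" using c eps by simp
  then have "(c/\<epsilon>) * s powr (-\<epsilon>) \<le> c/\<epsilon>" using p mult_left_le by blast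
  then show "exp (-(c/\<epsilon>)) \<le> exp (-(c/\<epsilon>) * s powr (-\<epsilon>))" by simp
  show "exp (-(c/\<epsilon>) * s powr (-\<epsilon>)) \<le> 1" using p \<open>c/\<epsilon> \<ge> 0\<close> by (simp add: mult_nonneg_nonneg del: times_divide_eq_left)
qed

lemma wrap:
  fixes x f g0 g01 f1 :: "real \<Rightarrow> real"
  assumes R: "1 \<le> R" and eps: "0 < \<epsilon>" and c: "0 \<le> c" and a: "0 \<le> a" and K: "0 \<le> K"
   and xnn: "\<And>t. t \<ge> R \<Longrightarrow> 0 \<le> x t"
   and xint: "\<And>t. t \<ge> R \<Longrightarrow> set_integrable lborel {R..t} x"
   and hx: "\<And>t. t \<ge> R \<Longrightarrow> x t \<le> f t + K/t + (1/t) * (LINT s:{R..t}|lborel. (1 + a + c * s powr (-\<epsilon>)) * x s)"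
   and dg: "\<And>s. s \<ge> R \<Longrightarrow> (g0 has_real_derivative g01 s) (at s)"
   and g01: "\<And>s. s \<ge> R \<Longrightarrow> 0 \<le> g01 s"
   and g0m: "\<And>s. s \<ge> R \<Longrightarrow> g0 R \<le> g0 s"
   and df: "\<And>s. s \<ge> R \<Longrightarrow> ((\<lambda>s. s * f s) has_real_derivative f1 s) (at s)"
   and hf: "\<And>s. s \<ge> R \<Longrightarrow> f1 s \<le> exp (-(c/\<epsilon>)) * s powr (1+a) * g01 s"
   and fc: "continuous_on {R..} f" and fpos: "\<And>t. t \<ge> R \<Longrightarrow> 0 < f t"
  shows "\<exists>A. \<forall>t\<ge>R. x t \<le> t powr a * (A + g0 t)"
proof -
  define e0 where "e0 = exp (-(c/\<epsilon>))"
  have e0: "0 < e0" unfolding e0_def by simp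
  define A where "A = - g0 R + (R * f R + K) / (e0 * R powr (1+a)) + 1"
  have R0: "0 < R" using R by simp
  have Rfk: "0 \<le> R * f R + K" using fpos[of R] R0 K by simp
  have Rp: "0 < R powr (1+a)" using R0 by simp
  have gpos: "0 < A + g0 s" if "s \<ge> R" for s
  proof -
    have "0 \<le> (R * f R + K) / (e0 * R powr (1+a))" using Rfk e0 Rp by simp
    then show ?thesis using g0m[OF that] unfolding A_def by simp
  qed
  { fix T assume T: "R \<le> T"
    have "x T \<le> T powr a * exp (-(c/\<epsilon>) * T powr (-\<epsilon>)) * (A + g0 T)"
    proof (rule bound_generic[where g="\<lambda>s. A + g0 s", OF R0 eps c a K xnn xint hx _ _ df _ fc fpos _ T])
      show "((\<lambda>s. A + g0 s) has_real_derivative g01 s) (at s)" if "s \<ge> R" for s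
        using DERIV_add[OF DERIV_const dg[OF that]] by simp
      show "0 < A + g0 s" if "s \<ge> R" for s using gpos[OF that] .
      show "f1 s \<le> s powr (1+a) * exp (-(c/\<epsilon>) * s powr (-\<epsilon>)) * g01 s" if s: "s \<ge> R" for s
      proof -
        have "f1 s \<le> e0 * s powr (1+a) * g01 s" using hf[OF s] unfolding e0_def .
        also have "\<dots> \<le> exp (-(c/\<epsilon>) * s powr (-\<epsilon>)) * s powr (1+a) * g01 s"
          using E_bounds(1)[of s \<epsilon> c] s R eps c g01[OF s] unfolding e0_def
          by (intro mult_right_mono) auto
        finally show ?thesis by (simp add: mult_ac)
      qed
      show "K \<le> R * (R powr a * exp (-(c/\<epsilon>) * R powr (-\<epsilon>)) * (A + g0 R)) - R * f R"
      proof -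
        have AR: "A + g0 R = (R * f R + K) / (e0 * R powr (1+a)) + 1" unfolding A_def by simp
        have "R * f R + K \<le> e0 * R powr (1+a) * (A + g0 R)"
          unfolding AR using e0 Rp Rfk by (simp add: field_simps)
        also have "\<dots> \<le> exp (-(c/\<epsilon>) * R powr (-\<epsilon>)) * R powr (1+a) * (A + g0 R)"
          using E_bounds(1)[of R \<epsilon> c] R eps c gpos[of R] Rp unfolding e0_def
          by (intro mult_right_mono) auto
        also have "\<dots> = R * (R powr a * exp (-(c/\<epsilon>) * R powr (-\<epsilon>)) * (A + g0 R))"
          using R0 by (simp add: powr_add mult_ac)
        finally show ?thesis by simp
      qed
    qed
    also have "\<dots> \<le> T powr a * 1 * (A + g0 T)"
      using E_bounds(2)[of T \<epsilon> c] T R eps c gpos[OF T]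
      by (intro mult_right_mono mult_left_mono) auto
    finally have "x T \<le> T powr a * (A + g0 T)" by simp }
  then show ?thesis by blast
qed




lemma df_pow:
  assumes "0 < s"
  shows "((\<lambda>s. s * (C * s powr \<theta>)) has_real_derivative C * (1 + \<theta>) * s powr \<theta>) (at s)"
proof -
  note d = DERIV_mult[OF DERIV_ident DERIV_cmult[OF has_real_derivative_powr[OF assms, of \<theta>], of C]]
  have "s powr (\<theta> - 1) = s powr \<theta> / s" using assms by (simp add: powr_diff)
  then show ?thesis apply (rule_tac DERIV_cong[OF d]) using assms by (simp add: field_simps)
qed

lemma case_lt:
  fixes x :: "real \<Rightarrow> real"
  assumes R: "1 \<le> R" and eps: "0 < \<epsilon>" and c: "0 \<le> c" and a: "0 \<le> a" and K: "0 \<le> K"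
   and C: "0 < C" and th: "0 \<le> \<theta>" and lt: "\<theta> < a"
   and xnn: "\<And>t. t \<ge> R \<Longrightarrow> 0 \<le> x t"
   and xint: "\<And>t. t \<ge> R \<Longrightarrow> set_integrable lborel {R..t} x"
   and hx: "\<And>t. t \<ge> R \<Longrightarrow> x t \<le> C * t powr \<theta> + K/t + (1/t) * (LINT s:{R..t}|lborel. (1 + a + c * s powr (-\<epsilon>)) * x s)"
  shows "\<exists>Ct>0. \<forall>t\<ge>R. x t \<le> Ct * t powr a"
proof -
  define e0 where "e0 = exp (-(c/\<epsilon>))"
  have e0: "0 < e0" unfolding e0_def by simp
  define B where "B = C * (1 + \<theta>) / (e0 * (a - \<theta>))"
  have B: "0 < B" unfolding B_def using C th lt e0 by simp
  have "\<exists>A. \<forall>t\<ge>R. x t \<le> t powr a * (A + (- B * t powr (\<theta> - a)))"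
  proof (rule wrap[OF R eps c a K xnn xint hx])
    show "((\<lambda>s. - B * s powr (\<theta> - a)) has_real_derivative B * (a - \<theta>) * s powr (\<theta> - a - 1)) (at s)"
      if "s \<ge> R" for s
      using DERIV_cmult[OF has_real_derivative_powr[of s "\<theta> - a"], of "-B"] that R
      by (simp add: algebra_simps)
    show "0 \<le> B * (a - \<theta>) * s powr (\<theta> - a - 1)" for s using B lt by simp
    show "- B * R powr (\<theta> - a) \<le> - B * s powr (\<theta> - a)" if "s \<ge> R" for s
      using powr_mono2'[of "\<theta> - a" R s] that R lt B by simp
    show "((\<lambda>s. s * (C * s powr \<theta>)) has_real_derivative C * (1 + \<theta>) * s powr \<theta>) (at s)"
      if "s \<ge> R" for s using df_pow that R by simp
    show "C * (1 + \<theta>) * s powr \<theta> \<le> exp (-(c/\<epsilon>)) * s powr (1+a) * (B * (a - \<theta>) * s powr (\<theta> - a - 1))"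
      if "s \<ge> R" for s
    proof -
      have "s powr (1+a) * s powr (\<theta> - a - 1) = s powr \<theta>" using that R by (simp flip: powr_add)
      moreover have "e0 * B * (a - \<theta>) = C * (1 + \<theta>)" unfolding B_def using e0 lt by simp
      ultimately show ?thesis unfolding e0_def[symmetric]
        by (metis (no_types, lifting) mult.assoc mult.commute order.refl)
    qed
    show "continuous_on {R..} (\<lambda>t. C * t powr \<theta>)"
      by (rule continuous_at_imp_continuous_on) (use R in \<open>auto intro!: continuous_intros\<close>)
    show "0 < C * t powr \<theta>" if "t \<ge> R" for t using C that R by simp
  qed
  then obtain A where A: "\<And>t. t \<ge> R \<Longrightarrow> x t \<le> t powr a * (A + (- B * t powr (\<theta> - a)))" by blast
  show ?thesis
  proof (intro exI[of _ "max A 1"] conjI allI impI)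
    fix t assume t: "R \<le> t"
    have "x t \<le> t powr a * (A + (- B * t powr (\<theta> - a)))" using A[OF t] .
    also have "\<dots> \<le> t powr a * max A 1"
    proof (intro mult_left_mono)
      have "0 \<le> B * t powr (\<theta> - a)" using B by simp
      then show "A + - B * t powr (\<theta> - a) \<le> max A 1" by linarith
    qed simp
    finally show "x t \<le> max A 1 * t powr a" by (simp add: mult.commute)
  qed simp
qed

lemma ln_ge1: "exp 1 \<le> (t::real) \<Longrightarrow> 1 \<le> ln t"
  by (metis exp_gt_zero less_le_trans ln_exp ln_le_cancel_iff)

lemma case_eq:
  fixes x :: "real \<Rightarrow> real"
  assumes R: "exp 1 \<le> R" and eps: "0 < \<epsilon>" and c: "0 \<le> c" and a: "0 \<le> a" and K: "0 \<le> K"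
   and C: "0 < C" and th: "0 \<le> \<theta>" and eq: "\<theta> = a"
   and xnn: "\<And>t. t \<ge> R \<Longrightarrow> 0 \<le> x t"
   and xint: "\<And>t. t \<ge> R \<Longrightarrow> set_integrable lborel {R..t} x"
   and hx: "\<And>t. t \<ge> R \<Longrightarrow> x t \<le> C * t powr \<theta> + K/t + (1/t) * (LINT s:{R..t}|lborel. (1 + a + c * s powr (-\<epsilon>)) * x s)"
  shows "\<exists>Ct>0. \<forall>t\<ge>R. x t \<le> Ct * t powr a * ln t"
proof -
  have R1: "1 \<le> R" using R by (meson exp_ge_add_one_self order_trans add_le_same_cancel2 zero_le_one order.trans[OF _ R] one_le_exp_iff)
  define e0 where "e0 = exp (-(c/\<epsilon>))"
  have e0: "0 < e0" unfolding e0_def by simp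
  define B where "B = C * (1 + \<theta>) / e0"
  have B: "0 < B" unfolding B_def using C th e0 by simp
  have "\<exists>A. \<forall>t\<ge>R. x t \<le> t powr a * (A + B * ln t)"
  proof (rule wrap[OF R1 eps c a K xnn xint hx])
    show "((\<lambda>s. B * ln s) has_real_derivative B * (1 / s)) (at s)"
      if "s \<ge> R" for s
      using DERIV_cmult[OF DERIV_ln[of s], of B] that R1 by (simp add: divide_inverse)
    show "0 \<le> B * (1 / s)" if "s \<ge> R" for s using B that R1 by simp
    show "B * ln R \<le> B * ln s" if "s \<ge> R" for s
      using that R1 B by (intro mult_left_mono) auto
    show "((\<lambda>s. s * (C * s powr \<theta>)) has_real_derivative C * (1 + \<theta>) * s powr \<theta>) (at s)"
      if "s \<ge> R" for s using df_pow that R1 by simp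
    show "C * (1 + \<theta>) * s powr \<theta> \<le> exp (-(c/\<epsilon>)) * s powr (1+a) * (B * (1 / s))"
      if "s \<ge> R" for s
    proof -
      have "s powr (1+a) * (1 / s) = s powr \<theta>" using that R1 eq by (simp add: powr_add)
      moreover have "e0 * B = C * (1 + \<theta>)" unfolding B_def using e0 by simp
      ultimately show ?thesis unfolding e0_def[symmetric]
        by (metis (no_types, lifting) mult.assoc mult.commute order.refl)
    qed
    show "continuous_on {R..} (\<lambda>t. C * t powr \<theta>)"
      by (rule continuous_at_imp_continuous_on) (use R1 in \<open>auto intro!: continuous_intros\<close>)
    show "0 < C * t powr \<theta>" if "t \<ge> R" for t using C that R1 by simp
  qed
  then obtain A where A: "\<And>t. t \<ge> R \<Longrightarrow> x t \<le> t powr a * (A + B * ln t)" by blast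
  show ?thesis
  proof (intro exI[of _ "\<bar>A\<bar> + B"] conjI allI impI)
    fix t assume t: "R \<le> t"
    have l: "1 \<le> ln t" using ln_ge1 R t by simp
    have "x t \<le> t powr a * (A + B * ln t)" using A[OF t] .
    also have "\<dots> \<le> t powr a * ((\<bar>A\<bar> + B) * ln t)"
    proof (intro mult_left_mono)
      have "A \<le> \<bar>A\<bar> * ln t" using l by (smt (verit) mult_le_cancel_left1)
      then show "A + B * ln t \<le> (\<bar>A\<bar> + B) * ln t" by (simp add: algebra_simps)
    qed simp
    finally show "x t \<le> (\<bar>A\<bar> + B) * t powr a * ln t" by (simp add: mult_ac)
  qed (use B in simp)
qed

lemma case_gt:
  fixes x :: "real \<Rightarrow> real"
  assumes R: "1 \<le> R" and eps: "0 < \<epsilon>" and c: "0 \<le> c" and a: "0 \<le> a" and K: "0 \<le> K"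
   and C: "0 < C" and gt: "a < \<theta>"
   and xnn: "\<And>t. t \<ge> R \<Longrightarrow> 0 \<le> x t"
   and xint: "\<And>t. t \<ge> R \<Longrightarrow> set_integrable lborel {R..t} x"
   and hx: "\<And>t. t \<ge> R \<Longrightarrow> x t \<le> C * t powr \<theta> + K/t + (1/t) * (LINT s:{R..t}|lborel. (1 + a + c * s powr (-\<epsilon>)) * x s)"
  shows "\<exists>Ct>0. \<forall>t\<ge>R. x t \<le> Ct * t powr \<theta>"
proof -
  define e0 where "e0 = exp (-(c/\<epsilon>))"
  have e0: "0 < e0" unfolding e0_def by simp
  define B where "B = C * (1 + \<theta>) / (e0 * (\<theta> - a))"
  have B: "0 < B" unfolding B_def using C a gt e0 by simp
  have "\<exists>A. \<forall>t\<ge>R. x t \<le> t powr a * (A + B * t powr (\<theta> - a))"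
  proof (rule wrap[OF R eps c a K xnn xint hx])
    show "((\<lambda>s. B * s powr (\<theta> - a)) has_real_derivative B * (\<theta> - a) * s powr (\<theta> - a - 1)) (at s)"
      if "s \<ge> R" for s
      using DERIV_cmult[OF has_real_derivative_powr[of s "\<theta> - a"], of "B"] that R
      by (simp add: algebra_simps)
    show "0 \<le> B * (\<theta> - a) * s powr (\<theta> - a - 1)" for s using B gt by simp
    show "B * R powr (\<theta> - a) \<le> B * s powr (\<theta> - a)" if "s \<ge> R" for s
      using powr_mono2[of "\<theta> - a" R s] that R gt B by simp
    show "((\<lambda>s. s * (C * s powr \<theta>)) has_real_derivative C * (1 + \<theta>) * s powr \<theta>) (at s)"
      if "s \<ge> R" for s using df_pow that R by simp
    show "C * (1 + \<theta>) * s powr \<theta> \<le> exp (-(c/\<epsilon>)) * s powr (1+a) * (B * (\<theta> - a) * s powr (\<theta> - a - 1))"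
      if "s \<ge> R" for s
    proof -
      have "s powr (1+a) * s powr (\<theta> - a - 1) = s powr \<theta>" using that R by (simp flip: powr_add)
      moreover have "e0 * B * (\<theta> - a) = C * (1 + \<theta>)" unfolding B_def using e0 gt by simp
      ultimately show ?thesis unfolding e0_def[symmetric]
        by (metis (no_types, lifting) mult.assoc mult.commute order.refl)
    qed
    show "continuous_on {R..} (\<lambda>t. C * t powr \<theta>)"
      by (rule continuous_at_imp_continuous_on) (use R in \<open>auto intro!: continuous_intros\<close>)
    show "0 < C * t powr \<theta>" if "t \<ge> R" for t using C that R by simp
  qed
  then obtain A where A: "\<And>t. t \<ge> R \<Longrightarrow> x t \<le> t powr a * (A + B * t powr (\<theta> - a))" by blast
  show ?thesis
  proof (intro exI[of _ "\<bar>A\<bar> + B"] conjI allI impI)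
    fix t assume t: "R \<le> t"
    have t0: "0 < t" using t R by simp
    have "x t \<le> t powr a * (A + B * t powr (\<theta> - a))" using A[OF t] .
    also have "\<dots> = A * t powr a + B * t powr \<theta>" using t0 by (simp add: algebra_simps flip: powr_add)
    also have "\<dots> \<le> \<bar>A\<bar> * t powr \<theta> + B * t powr \<theta>"
    proof -
      have "t powr a \<le> t powr \<theta>" using powr_mono[of a \<theta> t] gt t R by simp
      then have "A * t powr a \<le> \<bar>A\<bar> * t powr \<theta>"
        by (smt (verit, best) abs_ge_self mult_left_mono mult_right_mono powr_ge_zero abs_ge_zero)
      then show ?thesis by simp
    qed
    finally show "x t \<le> (\<bar>A\<bar> + B) * t powr \<theta>" by (simp add: algebra_simps)
  qed (use B in simp)
qed

lemma df_powln:
  assumes s: "0 < s"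
  shows "((\<lambda>s. s * (C * s powr \<theta> * ln s)) has_real_derivative C * ((1 + \<theta>) * s powr \<theta> * ln s + s powr \<theta>)) (at s)"
proof -
  note d = DERIV_mult[OF DERIV_ident DERIV_mult[OF DERIV_cmult[OF has_real_derivative_powr[OF s, of \<theta>], of C] DERIV_ln[OF s]]]
  have "s powr (\<theta> - 1) = s powr \<theta> / s" using s by (simp add: powr_diff)
  then show ?thesis apply (rule_tac DERIV_cong[OF d]) using s by (simp add: field_simps)
qed

lemma dg_powln:
  assumes s: "0 < s"
  shows "((\<lambda>s. B * (s powr b * ln s)) has_real_derivative B * (b * s powr (b - 1) * ln s + s powr b / s)) (at s)"
proof -
  note d = DERIV_cmult[OF DERIV_mult[OF has_real_derivative_powr[OF s, of b] DERIV_ln[OF s]], of B]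
  show ?thesis apply (rule_tac DERIV_cong[OF d]) using s by (simp add: field_simps)
qed

lemma case_log:
  fixes x :: "real \<Rightarrow> real"
  assumes R: "exp 1 \<le> R" and eps: "0 < \<epsilon>" and c: "0 \<le> c" and a: "0 \<le> a" and K: "0 \<le> K"
   and C: "0 < C" and gt: "a < \<theta>"
   and xnn: "\<And>t. t \<ge> R \<Longrightarrow> 0 \<le> x t"
   and xint: "\<And>t. t \<ge> R \<Longrightarrow> set_integrable lborel {R..t} x"
   and hx: "\<And>t. t \<ge> R \<Longrightarrow> x t \<le> C * t powr \<theta> * ln t + K/t + (1/t) * (LINT s:{R..t}|lborel. (1 + a + c * s powr (-\<epsilon>)) * x s)"
  shows "\<exists>Ct>0. \<forall>t\<ge>R. x t \<le> Ct * t powr \<theta> * ln t"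
proof -
  have R1: "1 \<le> R" using R by (meson exp_ge_add_one_self order_trans add_le_same_cancel2 zero_le_one order.trans[OF _ R] one_le_exp_iff)
  define e0 where "e0 = exp (-(c/\<epsilon>))"
  have e0: "0 < e0" unfolding e0_def by simp
  define B where "B = C * (2 + \<theta>) / (e0 * (\<theta> - a))"
  have B: "0 < B" unfolding B_def using C a gt e0 by simp
  have "\<exists>A. \<forall>t\<ge>R. x t \<le> t powr a * (A + B * (t powr (\<theta> - a) * ln t))"
  proof (rule wrap[OF R1 eps c a K xnn xint hx])
    show "((\<lambda>s. B * (s powr (\<theta> - a) * ln s)) has_real_derivative
       B * ((\<theta> - a) * s powr (\<theta> - a - 1) * ln s + s powr (\<theta> - a) / s)) (at s)"
      if "s \<ge> R" for s using dg_powln that R1 by simp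
    show "0 \<le> B * ((\<theta> - a) * s powr (\<theta> - a - 1) * ln s + s powr (\<theta> - a) / s)" if "s \<ge> R" for s
      using B gt that R1 by simp
    show "B * (R powr (\<theta> - a) * ln R) \<le> B * (s powr (\<theta> - a) * ln s)" if "s \<ge> R" for s
      using powr_mono2[of "\<theta> - a" R s] that R1 gt B
      by (intro mult_left_mono mult_mono) auto
    show "((\<lambda>s. s * (C * s powr \<theta> * ln s)) has_real_derivative C * ((1 + \<theta>) * s powr \<theta> * ln s + s powr \<theta>)) (at s)"
      if "s \<ge> R" for s using df_powln that R1 by simp
    show "C * ((1 + \<theta>) * s powr \<theta> * ln s + s powr \<theta>) \<le> exp (-(c/\<epsilon>)) * s powr (1+a) *
       (B * ((\<theta> - a) * s powr (\<theta> - a - 1) * ln s + s powr (\<theta> - a) / s))"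
      if s: "s \<ge> R" for s
    proof -
      have s0: "0 < s" using s R1 by simp
      have l: "1 \<le> ln s" using ln_ge1 R s by simp
      have p1: "s powr (1+a) * s powr (\<theta> - a - 1) = s powr \<theta>" using s0 by (simp flip: powr_add)
      have p2: "s powr (1+a) * (s powr (\<theta> - a) / s) = s powr \<theta>"
      proof -
        have "s powr (1+a) * s powr (\<theta> - a) = s powr (1 + \<theta>)" by (simp flip: powr_add)
        also have "\<dots> = s * s powr \<theta>" using s0 by (simp add: powr_add)
        finally show ?thesis using s0 by (simp add: field_simps)
      qed
      have eB: "e0 * B * (\<theta> - a) = C * (2 + \<theta>)" unfolding B_def using e0 gt by simp
      have "e0 * s powr (1+a) * (B * ((\<theta> - a) * s powr (\<theta> - a - 1) * ln s + s powr (\<theta> - a) / s))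
          = (e0 * B * (\<theta> - a)) * (s powr (1+a) * s powr (\<theta> - a - 1)) * ln s + e0 * B * (s powr (1+a) * (s powr (\<theta> - a) / s))"
        by (simp add: algebra_simps)
      also have "\<dots> = C * (2 + \<theta>) * s powr \<theta> * ln s + e0 * B * s powr \<theta>" using p1 p2 eB by simp
      finally have eqn: "e0 * s powr (1+a) * (B * ((\<theta> - a) * s powr (\<theta> - a - 1) * ln s + s powr (\<theta> - a) / s))
          = C * (2 + \<theta>) * s powr \<theta> * ln s + e0 * B * s powr \<theta>" .
      have "s powr \<theta> \<le> s powr \<theta> * ln s" using l by (simp add: mult_le_cancel_left1)
      then have "C * ((1 + \<theta>) * s powr \<theta> * ln s + s powr \<theta>) \<le> C * (2 + \<theta>) * s powr \<theta> * ln s"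
        using C by (simp add: algebra_simps)
      also have "\<dots> \<le> C * (2 + \<theta>) * s powr \<theta> * ln s + e0 * B * s powr \<theta>" using e0 B by simp
      finally show ?thesis unfolding e0_def[symmetric] eqn .
    qed
    show "continuous_on {R..} (\<lambda>t. C * t powr \<theta> * ln t)"
      by (rule continuous_at_imp_continuous_on) (use R1 in \<open>auto intro!: continuous_intros\<close>)
    show "0 < C * t powr \<theta> * ln t" if "t \<ge> R" for t
    proof -
      have "0 < t powr \<theta>" using that R1 by auto
      moreover have "0 < ln t" using ln_ge1[of t] that R by linarith
      ultimately show ?thesis using C by simp
    qed
  qed
  then obtain A where A: "\<And>t. t \<ge> R \<Longrightarrow> x t \<le> t powr a * (A + B * (t powr (\<theta> - a) * ln t))" by blast
  show ?thesis
  proof (intro exI[of _ "\<bar>A\<bar> + B"] conjI allI impI)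
    fix t assume t: "R \<le> t"
    have t0: "0 < t" using t R1 by simp
    have l: "1 \<le> ln t" using ln_ge1 R t by simp
    have "x t \<le> t powr a * (A + B * (t powr (\<theta> - a) * ln t))" using A[OF t] .
    also have "\<dots> = A * t powr a + B * t powr \<theta> * ln t" using t0 by (simp add: algebra_simps flip: powr_add)
    also have "\<dots> \<le> \<bar>A\<bar> * t powr \<theta> * ln t + B * t powr \<theta> * ln t"
    proof -
      have "t powr a \<le> t powr \<theta>" using powr_mono[of a \<theta> t] gt t R1 by simp
      also have "\<dots> \<le> t powr \<theta> * ln t" using l by (simp add: mult_le_cancel_left1)
      finally have "A * t powr a \<le> \<bar>A\<bar> * (t powr \<theta> * ln t)"
        by (smt (verit, best) abs_ge_self mult_left_mono mult_right_mono powr_ge_zero abs_ge_zero)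
      then show ?thesis by (simp add: mult_ac)
    qed
    finally show "x t \<le> (\<bar>A\<bar> + B) * t powr \<theta> * ln t" by (simp add: algebra_simps)
  qed (use B in simp)
qed




lemma reduce:
  fixes x d D F :: "real \<Rightarrow> real"
  assumes R: "0 < R"
   and xnn: "\<forall>t\<ge>0. 0 \<le> x t" and xint: "\<forall>t\<ge>0. set_integrable lborel {0..t} x"
   and dle: "\<And>s. s \<ge> R \<Longrightarrow> d s \<le> D s" and Dc: "continuous_on {R..} D"
   and Dnn: "\<And>s. s \<ge> R \<Longrightarrow> 0 \<le> D s"
   and hyp: "\<forall>t\<ge>R. x t \<le> F t + (1 / t) * (LINT s:{0..t}|lborel. d s * x s)"
   and t: "R \<le> t"
  shows "x t \<le> F t + \<bar>LINT s:{0..<R}|lborel. d s * x s\<bar> / t + (1/t) * (LINT s:{R..t}|lborel. D s * x s)"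
proof -
  define K where "K = \<bar>LINT s:{0..<R}|lborel. d s * x s\<bar>"
  have xi: "set_integrable lborel {R..t} x"
    by (rule set_integrable_subset[OF xint[rule_format, of t]]) (use R t in auto)
  have DcS: "continuous_on {R..t} D" using Dc by (rule continuous_on_subset) auto
  have Dxi: "set_integrable lborel {R..t} (\<lambda>s. D s * x s)" by (rule setint_cont_mult[OF DcS xi])
  have I1nn: "0 \<le> (LINT s:{R..t}|lborel. D s * x s)"
    by (rule setint_nonneg) (use Dnn xnn R in auto)
  have main: "(LINT s:{0..t}|lborel. d s * x s) \<le> K + (LINT s:{R..t}|lborel. D s * x s)"
  proof (cases "set_integrable lborel {0..t} (\<lambda>s. d s * x s)")
    case True
    have i0: "set_integrable lborel {0..<R} (\<lambda>s. d s * x s)"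
      by (rule set_integrable_subset[OF True]) (use t in auto)
    have i1: "set_integrable lborel {R..t} (\<lambda>s. d s * x s)"
      by (rule set_integrable_subset[OF True]) (use R in auto)
    have "{0..t} = {0..<R} \<union> {R..t}" using R t by auto
    then have "(LINT s:{0..t}|lborel. d s * x s) = (LINT s:{0..<R}|lborel. d s * x s) + (LINT s:{R..t}|lborel. d s * x s)"
    proof -
      have "{0..<R} \<inter> {R..t} = {}" by auto
      from set_integral_Un[OF this i0 i1] show ?thesis using \<open>{0..t} = {0..<R} \<union> {R..t}\<close> by simp
    qed
    also have "\<dots> \<le> K + (LINT s:{R..t}|lborel. D s * x s)"
    proof (rule add_mono)
      show "(LINT s:{0..<R}|lborel. d s * x s) \<le> K" unfolding K_def by simp
      show "(LINT s:{R..t}|lborel. d s * x s) \<le> (LINT s:{R..t}|lborel. D s * x s)"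
        by (rule set_integral_mono[OF i1 Dxi]) (use dle xnn R in \<open>auto intro: mult_right_mono\<close>)
    qed
    finally show ?thesis .
  next
    case False
    then have "(LINT s:{0..t}|lborel. d s * x s) = 0"
      unfolding set_lebesgue_integral_def set_integrable_def by (rule not_integrable_integral_eq)
    then show ?thesis using I1nn unfolding K_def by simp
  qed
  have "(1/t) * (LINT s:{0..t}|lborel. d s * x s) \<le> (1/t) * (K + (LINT s:{R..t}|lborel. D s * x s))"
    using main R t by (intro mult_left_mono) auto
  also have "\<dots> = K/t + (1/t) * (LINT s:{R..t}|lborel. D s * x s)" by (simp add: add_divide_distrib)
  finally show ?thesis using hyp t unfolding K_def by force
qed




lemma powr_setint:
  fixes p b :: real
  assumes "p > -1" "b \<ge> 0"
  shows "set_integrable lborel {0..b} (\<lambda>t. t powr p)"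
proof -
  have "(\<lambda>t. t powr p) integrable_on {0..b}"
    by (rule integrable_on_powr_from_0) (use assms in auto)
  hence "(\<lambda>t. t powr p) absolutely_integrable_on {0..b}"
    by (subst absolutely_integrable_on_iff_nonneg) auto
  then show ?thesis unfolding set_integrable_def
    by (subst (asm) integrable_completion) auto
qed

lemma local_form:
  fixes P q :: "real \<Rightarrow> real"
  assumes S: "open S" "y \<in> S" "\<And>z. z \<in> S \<Longrightarrow> z > 0"
    and eq: "\<And>z. z \<in> S \<Longrightarrow> P z = \<kappa> * z powr \<gamma> * (1 + q z)"
    and k: "\<kappa> \<noteq> 0" and dP: "P differentiable at y"
  shows "(q has_real_derivative deriv q y) (at y)"
    and "deriv P y = \<kappa> * (\<gamma> * y powr (\<gamma> - 1) * (1 + q y) + y powr \<gamma> * deriv q y)"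
proof -
  have y0: "y > 0" using S by auto
  have dP': "(P has_real_derivative deriv P y) (at y)"
    using dP DERIV_deriv_iff_real_differentiable by blast
  define Q where "Q = (\<lambda>z. P z / (\<kappa> * z powr \<gamma>) - 1)"
  have QD: "(Q has_real_derivative (deriv P y * (\<kappa> * y powr \<gamma>) - P y * (\<kappa> * (\<gamma> * y powr (\<gamma> - 1)))) / (\<kappa> * y powr \<gamma>)^2) (at y)"
    unfolding Q_def
    using DERIV_diff[OF DERIV_divide[OF dP' DERIV_cmult[OF has_real_derivative_powr[OF y0, of \<gamma>], of \<kappa>]] DERIV_const[of 1]] k y0
    by (simp add: power2_eq_square)
  have qQ: "Q z = q z" if "z \<in> S" for z
    using eq[OF that] k S(3)[OF that] unfolding Q_def by (simp add: field_simps)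
  have qD: "(q has_real_derivative (deriv P y * (\<kappa> * y powr \<gamma>) - P y * (\<kappa> * (\<gamma> * y powr (\<gamma> - 1)))) / (\<kappa> * y powr \<gamma>)^2) (at y)"
    by (rule has_field_derivative_transform_within_open[OF QD S(1,2)]) (use qQ in auto)
  then show qd: "(q has_real_derivative deriv q y) (at y)"
    using DERIV_imp_deriv by metis
  let ?RHS = "\<lambda>z. \<kappa> * z powr \<gamma> * (1 + q z)"
  have "(?RHS has_real_derivative (\<kappa> * (\<gamma> * y powr (\<gamma> - 1))) * (1 + q y) + (0 + deriv q y) * (\<kappa> * y powr \<gamma>)) (at y)"
    by (intro DERIV_mult DERIV_cmult has_real_derivative_powr y0 DERIV_add DERIV_const qd)
  then have "(P has_real_derivative (\<kappa> * (\<gamma> * y powr (\<gamma> - 1))) * (1 + q y) + (0 + deriv q y) * (\<kappa> * y powr \<gamma>)) (at y)"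
    by (rule has_field_derivative_transform_within_open[OF _ S(1,2)]) (use eq in auto)
  then show "deriv P y = \<kappa> * (\<gamma> * y powr (\<gamma> - 1) * (1 + q y) + y powr \<gamma> * deriv q y)"
    by (auto dest!: DERIV_imp_deriv simp: algebra_simps)
qed

lemma local_form2:
  fixes P q :: "real \<Rightarrow> real"
  assumes S: "open S" "y \<in> S" "\<And>z. z \<in> S \<Longrightarrow> z > 0"
    and eq: "\<And>z. z \<in> S \<Longrightarrow> P z = \<kappa> * z powr \<gamma> * (1 + q z)"
    and k: "\<kappa> \<noteq> 0" and dP: "\<And>z. z \<in> S \<Longrightarrow> P differentiable at z"
    and dP2: "deriv P differentiable at y"
  shows "(deriv q has_real_derivative deriv (deriv q) y) (at y)"
    and "deriv (deriv P) y = \<kappa> * (\<gamma> * (\<gamma> - 1) * y powr (\<gamma> - 2) * (1 + q y)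
            + 2 * \<gamma> * y powr (\<gamma> - 1) * deriv q y + y powr \<gamma> * deriv (deriv q) y)"
proof -
  have y0: "y > 0" using S by auto
  have qd: "(q has_real_derivative deriv q z) (at z)" if "z \<in> S" for z
    using local_form(1)[OF S(1) that S(3) eq k dP[OF that]] by blast
  have dPe: "deriv P z = \<kappa> * (\<gamma> * z powr (\<gamma> - 1) * (1 + q z) + z powr \<gamma> * deriv q z)" if "z \<in> S" for z
    using local_form(2)[OF S(1) that S(3) eq k dP[OF that]] by blast
  have dP2': "(deriv P has_real_derivative deriv (deriv P) y) (at y)"
    using dP2 DERIV_deriv_iff_real_differentiable by blast
  define H where "H = (\<lambda>z. (deriv P z / \<kappa> - \<gamma> * z powr (\<gamma> - 1) * (1 + q z)) / z powr \<gamma>)"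
  have Hq: "H z = deriv q z" if "z \<in> S" for z
    using dPe[OF that] k S(3)[OF that] unfolding H_def by (simp add: field_simps)
  have "\<exists>H'. (H has_real_derivative H') (at y)"
  proof -
    note D1 = DERIV_cdivide[OF dP2', of \<kappa>]
    note D2 = DERIV_mult[OF DERIV_cmult[OF has_real_derivative_powr[OF y0, of "\<gamma>-1"], of \<gamma>] DERIV_add[OF DERIV_const qd[OF S(2)]]]
    have "y powr \<gamma> \<noteq> 0" using y0 by simp
    note D3 = DERIV_divide[OF DERIV_diff[OF D1 D2] has_real_derivative_powr[OF y0, of \<gamma>] this]
    show ?thesis unfolding H_def using D3 by blast
  qed
  then obtain H' where HD: "(H has_real_derivative H') (at y)" by blast
  have "(deriv q has_real_derivative H') (at y)"
    by (rule has_field_derivative_transform_within_open[OF HD S(1,2)]) (use Hq in auto)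
  then show qd2: "(deriv q has_real_derivative deriv (deriv q) y) (at y)"
    using DERIV_imp_deriv by metis
  let ?RHS = "\<lambda>z. \<kappa> * (\<gamma> * z powr (\<gamma> - 1) * (1 + q z) + z powr \<gamma> * deriv q z)"
  have e: "y powr (\<gamma> - 1 - 1) = y powr (\<gamma> - 2)" by simp
  have "(?RHS has_real_derivative \<kappa> * ((\<gamma> * ((\<gamma> - 1) * y powr (\<gamma> - 1 - 1))) * (1 + q y) + (0 + deriv q y) * (\<gamma> * y powr (\<gamma> - 1))
          + ((\<gamma> * y powr (\<gamma> - 1)) * deriv q y + deriv (deriv q) y * y powr \<gamma>))) (at y)"
    by (intro DERIV_mult DERIV_cmult has_real_derivative_powr y0 DERIV_add DERIV_const qd[OF S(2)] qd2)
  then have "(deriv P has_real_derivative \<kappa> * ((\<gamma> * ((\<gamma> - 1) * y powr (\<gamma> - 1 - 1))) * (1 + q y) + (0 + deriv q y) * (\<gamma> * y powr (\<gamma> - 1))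
          + ((\<gamma> * y powr (\<gamma> - 1)) * deriv q y + deriv (deriv q) y * y powr \<gamma>))) (at y)"
    by (rule has_field_derivative_transform_within_open[OF _ S(1,2)]) (use dPe in auto)
  then show "deriv (deriv P) y = \<kappa> * (\<gamma> * (\<gamma> - 1) * y powr (\<gamma> - 2) * (1 + q y)
            + 2 * \<gamma> * y powr (\<gamma> - 1) * deriv q y + y powr \<gamma> * deriv (deriv q) y)"
    by (auto dest!: DERIV_imp_deriv simp: algebra_simps e)
qed

lemma kfun_like_deriv:
  fixes f k :: "real \<Rightarrow> real"
  assumes b: "0 < b" and fi: "set_integrable lborel {0..b} f" and fc: "continuous_on {b..} f"
    and kdef: "\<And>z. z \<ge> b \<Longrightarrow> k z = (LINT y:{0..z}|lborel. f y)"
    and s: "s > b"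
  shows "(k has_real_derivative f s) (at s)"
proof -
  define I0 where "I0 = (LINT y:{0..<b}|lborel. f y)"
  have keq: "k z = I0 + integral {b..z} f" if z: "z > b" for z
  proof -
    have c: "continuous_on {b..z} f" using fc by (rule continuous_on_subset) auto
    have i1: "set_integrable lborel {b..z} f"
      using borel_integrable_compact[OF _ c] unfolding set_integrable_def by simp
    have i0: "set_integrable lborel {0..<b} f"
      by (rule set_integrable_subset[OF fi]) auto
    have u: "{0..z} = {0..<b} \<union> {b..z}" using b z by auto
    have d: "{0..<b} \<inter> {b..z} = {}" by auto
    have "k z = (LINT y:{0..z}|lborel. f y)" using kdef z by simp
    also have "\<dots> = (LINT y:{0..<b}|lborel. f y) + (LINT y:{b..z}|lborel. f y)"
      unfolding u by (rule set_integral_Un[OF d i0 i1])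
    finally have "k z = (LINT y:{0..<b}|lborel. f y) + (LINT y:{b..z}|lborel. f y)" .
    then show ?thesis unfolding I0_def using set_borel_integral_eq_integral(2)[OF i1] by simp
  qed
  have c2: "continuous_on {b..s+1} f" using fc by (rule continuous_on_subset) auto
  have "((\<lambda>z. integral {b..z} f) has_real_derivative f s) (at s within {b..s+1})"
    by (rule integral_has_real_derivative[OF c2]) (use s in auto)
  moreover have "s \<in> interior {b..s+1}" using s by simp
  ultimately have "((\<lambda>z. integral {b..z} f) has_real_derivative f s) (at s)"
    by (metis at_within_interior)
  then have "((\<lambda>z. I0 + integral {b..z} f) has_real_derivative 0 + f s) (at s)"
    by (intro DERIV_add DERIV_const)
  then have "((\<lambda>z. I0 + integral {b..z} f) has_real_derivative f s) (at s)" by simp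
  then show ?thesis
    by (rule has_field_derivative_transform_within_open[of _ _ _ "{b<..}"]) (use s keq in auto)
qed

lemma dfun_formula:
  fixes P :: "real \<Rightarrow> real"
  assumes b: "0 < b" and s: "s > b" and pos: "deriv P s > 0" and dP2: "deriv P differentiable at s"
    and kd: "\<And>z. z > b \<Longrightarrow> (kfun P has_real_derivative sqrt (deriv P z) / z) (at z)"
  shows "dfun P s = 1 + s * deriv (deriv P) s / (2 * deriv P s)"
proof -
  have s0: "s > 0" using b s by simp
  have dk: "deriv (kfun P) z = sqrt (deriv P z) / z" if "z > b" for z
    using DERIV_imp_deriv[OF kd[OF that]] .
  have "eventually (\<lambda>z. z \<in> {b<..}) (nhds s)"
    using s by (intro eventually_nhds_in_open) auto
  then have "eventually (\<lambda>z. deriv (kfun P) z = sqrt (deriv P z) / z) (nhds s)"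
    by eventually_elim (use dk in auto)
  then have dd: "deriv (deriv (kfun P)) s = deriv (\<lambda>z. sqrt (deriv P z) / z) s"
    by (rule deriv_cong_ev) simp
  define p where "p = deriv P s"
  define p2 where "p2 = deriv (deriv P) s"
  have dP2': "(deriv P has_real_derivative p2) (at s)"
    unfolding p2_def using dP2 DERIV_deriv_iff_real_differentiable by blast
  note D = DERIV_divide[OF DERIV_chain2[OF DERIV_real_sqrt[OF pos] dP2'] DERIV_ident]
  have "deriv (\<lambda>z. sqrt (deriv P z) / z) s = (inverse (sqrt p) / 2 * p2 * s - sqrt p * 1) / (s * s)"
    using DERIV_imp_deriv[OF D] s0 unfolding p_def by simp
  moreover have "deriv (kfun P) s = sqrt p / s" using dk[OF s] unfolding p_def .
  ultimately have "dfun P s = 2 + s * ((inverse (sqrt p) / 2 * p2 * s - sqrt p * 1) / (s * s)) / (sqrt p / s)"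
    unfolding dfun_def dd by simp
  also have "\<dots> = 1 + s * p2 / (2 * p)"
  proof -
    have sp: "sqrt p > 0" "sqrt p * sqrt p = p" using pos unfolding p_def by auto
    have alg: "2 + s * ((inverse r / 2 * p2 * s - r * 1) / (s * s)) / (r / s) = 1 + s * p2 / (2 * (r * r))"
      if "r > 0" for r using that s0 by (simp add: field_simps)
    show ?thesis using alg[OF sp(1)] unfolding sp(2) .
  qed
  finally show ?thesis unfolding p_def p2_def .
qed




lemma ratio_bound:
  fixes g h A0 A1 A2 :: real
  assumes g: "0 < g" and h: "0 \<le> h" and a0: "\<bar>A0\<bar> \<le> h" and a1: "\<bar>A1\<bar> \<le> h" and a2: "\<bar>A2\<bar> \<le> h"
    and hs: "(g + 1) * h \<le> g / 2"
  shows "(g * (g - 1) * (1 + A0) + 2 * g * A1 + A2) / (2 * (g * (1 + A0) + A1)) \<le> (g - 1) / 2 + (g + 2) * h / g"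
proof -
  define Dn where "Dn = g * (1 + A0) + A1"
  define X where "X = (g + 1) * A1 + A2"
  have Dn: "g / 2 \<le> Dn"
  proof -
    have "- h \<le> A0" using a0 by linarith
    then have "g * (- h) \<le> g * A0" using g by (intro mult_left_mono) auto
    moreover have "- h \<le> A1" using a1 by linarith
    ultimately have "g - g * h - h \<le> Dn" unfolding Dn_def by (simp add: algebra_simps)
    moreover have "g * h + h = (g + 1) * h" by (simp add: algebra_simps)
    ultimately show ?thesis using hs by linarith
  qed
  have Dp: "0 < Dn" using Dn g by simp
  have N: "g * (g - 1) * (1 + A0) + 2 * g * A1 + A2 = (g - 1) * Dn + X"
    unfolding Dn_def X_def by (simp add: algebra_simps)
  have X: "X \<le> (g + 2) * h"
  proof -
    have "(g + 1) * A1 \<le> (g + 1) * h" using a1 g by (intro mult_left_mono) auto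
    then show ?thesis unfolding X_def using a2 by (simp add: algebra_simps)
  qed
  have "X / Dn \<le> (g + 2) * h / (g / 2)"
  proof (cases "X \<le> 0")
    case True
    then have "X / Dn \<le> 0" using Dp by (simp add: divide_nonpos_pos)
    also have "0 \<le> (g + 2) * h / (g / 2)" using g h by simp
    finally show ?thesis .
  next
    case False
    have "X / Dn \<le> X / (g / 2)" using False Dn g by (intro divide_left_mono) auto
    also have "\<dots> \<le> (g + 2) * h / (g / 2)" using X g by (intro divide_right_mono) auto
    finally show ?thesis .
  qed
  then have XD: "X / Dn / 2 \<le> (g + 2) * h / g" using g by (simp add: field_simps)
  have "(g * (g - 1) * (1 + A0) + 2 * g * A1 + A2) / (2 * (g * (1 + A0) + A1)) = (g - 1) / 2 + X / Dn / 2"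
    unfolding N Dn_def[symmetric] using Dp by (simp add: field_simps)
  then show ?thesis using XD by simp
qed

lemma f_cont:
  fixes P :: "real \<Rightarrow> real"
  assumes dP1: "\<And>r. r > 0 \<Longrightarrow> deriv P differentiable at r" and that: "a > 0"
  shows "continuous_on {a..} (\<lambda>y. sqrt (deriv P y) / y)"
proof (rule continuous_at_imp_continuous_on, intro ballI)
  fix y assume "y \<in> {a..}"
  then have y: "y > 0" using that by auto
  have "isCont (deriv P) y" using dP1[OF y] by (rule differentiable_imp_continuous_within)
  then show "isCont (\<lambda>y. sqrt (deriv P y) / y) y" using y by (intro continuous_intros) auto
qed

lemma int_near0:
  fixes P q :: "real \<Rightarrow> real"
  assumes g1: "1 < \<gamma>"
    and eq: "\<And>z. z \<in> {0<..<rl} \<Longrightarrow> P z = \<kappa> * z powr \<gamma> * (1 + q z)" and k: "\<kappa> \<noteq> 0"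
    and dP: "\<And>r. r > 0 \<Longrightarrow> P differentiable at r"
    and dP1: "\<And>r. r > 0 \<Longrightarrow> deriv P differentiable at r"
    and pos: "\<And>r. r > 0 \<Longrightarrow> deriv P r > 0"
    and b0: "\<And>z. z \<in> {0<..<rl} \<Longrightarrow> \<bar>q z\<bar> \<le> Cl * z powr (\<gamma> - 1)"
    and b1: "\<And>z. z \<in> {0<..<rl} \<Longrightarrow> \<bar>deriv q z\<bar> \<le> Cl * z powr (\<gamma> - 2)"
    and b: "0 < b" "b < rl" "b \<le> 1"
  shows "set_integrable lborel {0..b} (\<lambda>y. sqrt (deriv P y) / y)"
proof -
  define f where "f = (\<lambda>y. sqrt (deriv P y) / y)"
  define M where "M = \<bar>\<kappa>\<bar> * (\<gamma> * (1 + \<bar>Cl\<bar>) + \<bar>Cl\<bar>)"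
  have M: "0 \<le> M" unfolding M_def using g1 by simp
  have dPb: "deriv P y \<le> M * y powr (\<gamma> - 1)" if y: "y \<in> {0<..b}" for y
  proof -
    have yS: "y \<in> {0<..<rl}" using y b by auto
    have y0: "0 < y" and y1: "y \<le> 1" using y b by auto
    have e: "deriv P y = \<kappa> * (\<gamma> * y powr (\<gamma> - 1) * (1 + q y) + y powr \<gamma> * deriv q y)"
      using local_form(2)[of "{0<..<rl}" y, OF _ yS _ eq k dP[OF y0]] by auto
    have p1: "y powr (\<gamma> - 1) \<le> 1" using y0 y1 g1 by (intro powr_le1) auto
    have p2: "y powr \<gamma> * y powr (\<gamma> - 2) = y powr (\<gamma> - 1) * y powr (\<gamma> - 1)"
      by (simp flip: powr_add)
    have q0: "\<bar>q y\<bar> \<le> \<bar>Cl\<bar>"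
    proof -
      have "\<bar>q y\<bar> \<le> Cl * y powr (\<gamma> - 1)" using b0[OF yS] .
      also have "\<dots> \<le> \<bar>Cl\<bar> * y powr (\<gamma> - 1)" by (intro mult_right_mono) auto
      also have "\<dots> \<le> \<bar>Cl\<bar> * 1" using p1 by (intro mult_left_mono) auto
      finally show ?thesis by simp
    qed
    have q1: "y powr \<gamma> * \<bar>deriv q y\<bar> \<le> \<bar>Cl\<bar> * y powr (\<gamma> - 1)"
    proof -
      have "y powr \<gamma> * \<bar>deriv q y\<bar> \<le> y powr \<gamma> * (\<bar>Cl\<bar> * y powr (\<gamma> - 2))"
        using b1[OF yS] by (intro mult_left_mono) (auto intro: order_trans[OF _ mult_right_mono[of Cl "\<bar>Cl\<bar>"]])
      also have "\<dots> = \<bar>Cl\<bar> * (y powr (\<gamma> - 1) * y powr (\<gamma> - 1))" using p2 by (simp add: mult_ac)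
      also have "\<dots> \<le> \<bar>Cl\<bar> * (y powr (\<gamma> - 1) * 1)" using p1 by (intro mult_left_mono) auto
      finally show ?thesis by simp
    qed
    have "deriv P y \<le> \<bar>\<kappa>\<bar> * \<bar>\<gamma> * y powr (\<gamma> - 1) * (1 + q y) + y powr \<gamma> * deriv q y\<bar>"
      unfolding e by (metis abs_ge_self abs_mult)
    also have "\<dots> \<le> \<bar>\<kappa>\<bar> * (\<gamma> * y powr (\<gamma> - 1) * (1 + \<bar>Cl\<bar>) + \<bar>Cl\<bar> * y powr (\<gamma> - 1))"
    proof (intro mult_left_mono)
      have "\<bar>\<gamma> * y powr (\<gamma> - 1) * (1 + q y)\<bar> \<le> \<gamma> * y powr (\<gamma> - 1) * (1 + \<bar>Cl\<bar>)"
        using q0 g1 by (simp add: abs_mult mult_left_mono)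
      moreover have "\<bar>y powr \<gamma> * deriv q y\<bar> \<le> \<bar>Cl\<bar> * y powr (\<gamma> - 1)" using q1 by (simp add: abs_mult)
      ultimately show "\<bar>\<gamma> * y powr (\<gamma> - 1) * (1 + q y) + y powr \<gamma> * deriv q y\<bar>
          \<le> \<gamma> * y powr (\<gamma> - 1) * (1 + \<bar>Cl\<bar>) + \<bar>Cl\<bar> * y powr (\<gamma> - 1)" by linarith
    qed simp
    also have "\<dots> = M * y powr (\<gamma> - 1)" unfolding M_def by (simp add: algebra_simps)
    finally show ?thesis .
  qed
  define p where "p = (\<gamma> - 1) / 2 - 1"
  have fb: "f y \<le> sqrt M * y powr p" if y: "y \<in> {0<..b}" for y
  proof -
    have y0: "0 < y" using y by auto
    have "sqrt (deriv P y) \<le> sqrt (M * y powr (\<gamma> - 1))" using dPb[OF y] by simp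
    also have "\<dots> = sqrt M * y powr ((\<gamma> - 1) / 2)"
      using y0 by (simp add: real_sqrt_mult powr_half_sqrt[symmetric] powr_powr)
    finally have "f y \<le> sqrt M * y powr ((\<gamma> - 1) / 2) / y" unfolding f_def using y0 by (simp add: divide_right_mono)
    also have "\<dots> = sqrt M * y powr p" unfolding p_def using y0 by (simp add: powr_diff)
    finally show ?thesis .
  qed
  have fnn: "0 \<le> f y" if "0 < y" for y unfolding f_def
    using pos[OF that] that by simp
  have f0: "f 0 = 0" unfolding f_def by simp
  have gi: "set_integrable lborel {0..b} (\<lambda>y. sqrt M * y powr p)"
    using powr_setint[of p b] g1 b unfolding p_def by simp
  have fc: "continuous_on {0<..b} f"
  proof (rule continuous_at_imp_continuous_on, intro ballI)
    fix y assume "y \<in> {0<..b}"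
    then have y: "y > 0" by auto
    have "isCont (deriv P) y" using dP1[OF y] by (rule differentiable_imp_continuous_within)
    then show "isCont f y" unfolding f_def using y by (intro continuous_intros) auto
  qed
  have meas: "set_borel_measurable lborel {0..b} f"
  proof -
    have "(\<lambda>y. indicator {0<..b} y *\<^sub>R f y) \<in> borel_measurable borel"
      by (rule borel_measurable_continuous_on_indicator[OF _ fc]) auto
    moreover have "(\<lambda>y. indicator {0<..b} y *\<^sub>R f y) = (\<lambda>y. indicator {0..b} y *\<^sub>R f y)"
    proof
      fix y show "indicator {0<..b} y *\<^sub>R f y = indicator {0..b} y *\<^sub>R f y"
        using f0 by (cases "y = 0") (auto simp: indicator_def)
    qed
    ultimately show ?thesis unfolding set_borel_measurable_def by simp
  qed
  have "set_integrable lborel {0..b} f"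
  proof (rule set_integrable_bound[OF gi meas], intro AE_I2 impI)
    fix y assume y: "y \<in> {0..b}"
    show "norm (f y) \<le> norm (sqrt M * y powr p)"
    proof (cases "y = 0")
      case True then show ?thesis using f0 by simp
    next
      case False
      then have "y \<in> {0<..b}" using y by auto
      then show ?thesis using fb fnn[of y] by (auto intro: order_trans[OF _ abs_ge_self])
    qed
  qed
  then show ?thesis unfolding f_def .
qed




lemma kfun_Icc: "0 \<le> z \<Longrightarrow> kfun P z = (LINT y:{0..z}|lborel. sqrt (deriv P y) / y)"
  unfolding kfun_def using interval_integral_Icc[of 0 z "\<lambda>y. sqrt (deriv P y) / y"] by (simp add: zero_ereal_def)

lemma d_bound':
  assumes hP1: "P1 P"
    and hP2: "P2 P rho_lo kappa1 gamma1 Clo calP1"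
    and hP3: "P3 P rho0 kappa2 gamma2 Chi calP2 eps gamma1"
    and hrho0: "rho_lo < rho0"
  shows "\<exists>R0 c. 0 \<le> c \<and> (\<forall>s\<ge>R0. dfun P s \<le> 1 + (gamma2 - 1) / 2 + c * s powr (-eps))"
proof -
  have dj: "\<forall>j<4. \<forall>r>0. (deriv ^^ j) P differentiable at r" using hP1 unfolding P1_def by blast
  have dP: "P differentiable at r" if "r > 0" for r using dj[rule_format, of 0 r] that by simp
  have dP1: "deriv P differentiable at r" if "r > 0" for r using dj[rule_format, of 1 r] that by simp
  have dP2: "deriv (deriv P) differentiable at r" if "r > 0" for r using dj[rule_format, of 2 r] that
    by (simp add: numeral_2_eq_2)
  have pos: "deriv P r > 0" if "r > 0" for r using hP1 that unfolding P1_def by blast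
  have rl: "0 < rho_lo" and g1: "1 < gamma1" using hP2 unfolding P2_def by auto
  have eq1: "P z = kappa1 * z powr gamma1 * (1 + calP1 z)" if "z \<in> {0<..<rho_lo}" for z
    using hP2 that unfolding P2_def by auto
  have bj1: "\<forall>j\<le>4. \<forall>\<rho>. 0 < \<rho> \<and> \<rho> < rho_lo \<longrightarrow> \<bar>(deriv ^^ j) calP1 \<rho>\<bar> \<le> Clo * \<rho> powr (gamma1 - 1 - real j)"
    using hP2 unfolding P2_def by blast
  have b10: "\<bar>calP1 z\<bar> \<le> Clo * z powr (gamma1 - 1)" if "z \<in> {0<..<rho_lo}" for z
    using bj1[rule_format, of 0 z] that by simp
  have b11: "\<bar>deriv calP1 z\<bar> \<le> Clo * z powr (gamma1 - 2)" if "z \<in> {0<..<rho_lo}" for z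
    using bj1[rule_format, of 1 z] that by (simp add: diff_diff_eq)
  have g2: "6/5 < gamma2" and eps: "0 < eps" using hP3 unfolding P3_def by auto
  have eq2: "P z = kappa2 * z powr gamma2 * (1 + calP2 z)" if "z \<in> {rho0<..}" for z
    using hP3 that unfolding P3_def by auto
  have bj2: "\<forall>j\<le>4. \<forall>\<rho>>rho0. \<bar>(deriv ^^ j) calP2 \<rho>\<bar> \<le> Chi * \<rho> powr (- eps - real j)"
    using hP3 unfolding P3_def by blast
  have b20: "\<bar>calP2 z\<bar> \<le> Chi * z powr (- eps)" if "z > rho0" for z
    using bj2[rule_format, of 0 z] that by simp
  have b21: "\<bar>deriv calP2 z\<bar> \<le> Chi * z powr (- eps - 1)" if "z > rho0" for z
    using bj2[rule_format, of 1 z] that by simp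
  have b22: "\<bar>deriv (deriv calP2) z\<bar> \<le> Chi * z powr (- eps - 2)" if "z > rho0" for z
    using bj2[rule_format, of 2 z] that by (simp add: numeral_2_eq_2)
  have rho0p: "0 < rho0" using rl hrho0 by simp
  have k1: "kappa1 \<noteq> 0"
  proof
    assume "kappa1 = 0"
    have c0: "((\<lambda>_. 0::real) has_real_derivative 0) (at (rho_lo/2))" by simp
    have "(P has_real_derivative 0) (at (rho_lo/2))"
      by (rule has_field_derivative_transform_within_open[OF c0, of "{0<..<rho_lo}"])
        (use rl eq1 \<open>kappa1 = 0\<close> in auto)
    then have "deriv P (rho_lo/2) = 0" by (rule DERIV_imp_deriv)
    then show False using pos[of "rho_lo/2"] rl by simp
  qed
  have k2: "kappa2 \<noteq> 0"
  proof
    assume "kappa2 = 0"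
    have c0: "((\<lambda>_. 0::real) has_real_derivative 0) (at (rho0+1))" by simp
    have "(P has_real_derivative 0) (at (rho0+1))"
      by (rule has_field_derivative_transform_within_open[OF c0, of "{rho0<..}"])
        (use eq2 \<open>kappa2 = 0\<close> in auto)
    then have "deriv P (rho0+1) = 0" by (rule DERIV_imp_deriv)
    then show False using pos[of "rho0+1"] rho0p by simp
  qed
  define b where "b = min (rho_lo/2) 1"
  have b: "0 < b" "b < rho_lo" "b \<le> 1" unfolding b_def using rl by auto
  have fi: "set_integrable lborel {0..b} (\<lambda>y. sqrt (deriv P y) / y)"
    by (rule int_near0[OF g1 eq1 k1 dP dP1 pos b10 b11 b]) auto
  have kd: "(kfun P has_real_derivative sqrt (deriv P z) / z) (at z)" if "z > b" for z
    by (rule kfun_like_deriv[OF b(1) fi f_cont[OF dP1 b(1)] _ that]) (use kfun_Icc b in auto)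
  have dform: "dfun P s = 1 + s * deriv (deriv P) s / (2 * deriv P s)" if "s > b" for s
    using dfun_formula[OF b(1) that pos dP1 kd] that b by auto
  have Chi: "0 \<le> Chi"
  proof -
    have "\<bar>calP2 (rho0+1)\<bar> \<le> Chi * (rho0+1) powr (- eps)" by (rule b20) simp
    then have "0 \<le> Chi * (rho0+1) powr (- eps)" using abs_ge_zero[of "calP2 (rho0+1)"] by linarith
    then show ?thesis using rho0p by (simp add: zero_le_mult_iff)
  qed
  define \<delta> where "\<delta> = gamma2 / (2 * (gamma2 + 1))"
  have \<delta>: "0 < \<delta>" unfolding \<delta>_def using g2 by simp
  have "((\<lambda>s::real. s powr (-eps)) \<longlongrightarrow> 0) at_top"
    by (rule tendsto_neg_powr) (use eps in \<open>auto simp: filterlim_ident\<close>)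
  then have "eventually (\<lambda>s::real. s powr (-eps) < \<delta> / (Chi + 1)) at_top"
    using \<delta> Chi by (intro order_tendstoD) auto
  then obtain S1 where S1: "\<And>s. s \<ge> S1 \<Longrightarrow> s powr (-eps) < \<delta> / (Chi + 1)"
    by (auto simp: eventually_at_top_linorder)
  define c where "c = (gamma2 + 2) * Chi / gamma2"
  have c: "0 \<le> c" unfolding c_def using Chi g2 by simp
  show ?thesis
  proof (rule exI[of _ "max (max S1 (rho0+1)) (b+1)"], rule exI[of _ c], intro conjI c allI impI)
    fix s assume sR: "max (max S1 (rho0+1)) (b+1) \<le> s"
    have sS1: "s \<ge> S1" and sr: "s > rho0" and sb: "s > b" using sR by auto
    have s0: "0 < s" using sr rho0p by simp
    have sS: "s \<in> {rho0<..}" using sr by simp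
    have Sp: "\<And>z. z \<in> {rho0<..} \<Longrightarrow> z > 0" using rho0p by auto
    define q where "q = calP2"
    define A0 where "A0 = q s"
    define A1 where "A1 = s * deriv q s"
    define A2 where "A2 = s^2 * deriv (deriv q) s"
    define E where "E = s powr (gamma2 - 1)"
    have E: "0 < E" unfolding E_def using s0 by simp
    have pe1: "s powr (gamma2 - 2) = E / s"
    proof -
      have "s powr (gamma2 - 2) = s powr ((gamma2 - 1) - 1)" by simp
      also have "\<dots> = s powr (gamma2 - 1) / s powr 1" by (rule powr_diff)
      finally show ?thesis unfolding E_def using s0 by simp
    qed
    have pe2: "s powr gamma2 = E * s"
    proof -
      have "s powr gamma2 = s powr ((gamma2 - 1) + 1)" by simp
      also have "\<dots> = s powr (gamma2 - 1) * s powr 1" by (rule powr_add)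
      finally show ?thesis unfolding E_def using s0 by simp
    qed
    have P1e: "deriv P s = kappa2 * (gamma2 * s powr (gamma2 - 1) * (1 + q s) + s powr gamma2 * deriv q s)"
      unfolding q_def by (rule local_form(2)[of "{rho0<..}", OF _ sS Sp eq2 k2 dP[OF s0]]) auto
    have P2e: "deriv (deriv P) s = kappa2 * (gamma2 * (gamma2 - 1) * s powr (gamma2 - 2) * (1 + q s)
            + 2 * gamma2 * s powr (gamma2 - 1) * deriv q s + s powr gamma2 * deriv (deriv q) s)"
      unfolding q_def by (rule local_form2(2)[of "{rho0<..}", OF _ sS Sp eq2 k2 _ dP1[OF s0]])
        (use dP rho0p in auto)
    have "s * deriv (deriv P) s / (2 * deriv P s)
        = (gamma2 * (gamma2 - 1) * (1 + A0) + 2 * gamma2 * A1 + A2) / (2 * (gamma2 * (1 + A0) + A1))"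
    proof -
      have n: "s * deriv (deriv P) s = kappa2 * E * (gamma2 * (gamma2 - 1) * (1 + A0) + 2 * gamma2 * A1 + A2)"
        unfolding P2e pe1 pe2 A0_def A1_def A2_def E_def[symmetric] using s0
        by (simp add: field_simps power2_eq_square)
      have d: "deriv P s = kappa2 * E * (gamma2 * (1 + A0) + A1)"
        unfolding P1e pe2 A0_def A1_def E_def[symmetric] using s0
        by (simp add: algebra_simps)
      show ?thesis unfolding n d using k2 E by simp
    qed
    moreover have "\<dots> \<le> (gamma2 - 1) / 2 + (gamma2 + 2) * (Chi * s powr (-eps)) / gamma2"
    proof (rule ratio_bound)
      show "0 < gamma2" using g2 by simp
      show "0 \<le> Chi * s powr (-eps)" using Chi by simp
      show "\<bar>A0\<bar> \<le> Chi * s powr (-eps)" unfolding A0_def q_def using b20[OF sr] .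
      show "\<bar>A1\<bar> \<le> Chi * s powr (-eps)"
      proof -
        have "\<bar>A1\<bar> = s * \<bar>deriv q s\<bar>" unfolding A1_def using s0 by (simp add: abs_mult)
        also have "\<dots> \<le> s * (Chi * s powr (- eps - 1))" using b21[OF sr] s0 unfolding q_def
          by (intro mult_left_mono) auto
        also have "\<dots> = Chi * s powr (-eps)" using s0 by (simp add: powr_diff field_simps)
        finally show ?thesis .
      qed
      show "\<bar>A2\<bar> \<le> Chi * s powr (-eps)"
      proof -
        have "\<bar>A2\<bar> = s^2 * \<bar>deriv (deriv q) s\<bar>" unfolding A2_def using s0 by (simp add: abs_mult)
        also have "\<dots> \<le> s^2 * (Chi * s powr (- eps - 2))" using b22[OF sr] s0 unfolding q_def
          by (intro mult_left_mono) auto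
        also have "\<dots> = Chi * s powr (-eps)" using s0 by (simp add: powr_diff field_simps power2_eq_square)
        finally show ?thesis .
      qed
      show "(gamma2 + 1) * (Chi * s powr (-eps)) \<le> gamma2 / 2"
      proof -
        have "Chi * s powr (-eps) \<le> (Chi + 1) * s powr (-eps)" by (simp add: mult_right_mono)
        also have "\<dots> \<le> (Chi + 1) * (\<delta> / (Chi + 1))" using S1[OF sS1] Chi
          by (intro mult_left_mono) auto
        also have "\<dots> = \<delta>" using Chi by simp
        finally have "(gamma2 + 1) * (Chi * s powr (-eps)) \<le> (gamma2 + 1) * \<delta>"
          using g2 by (intro mult_left_mono) auto
        also have "\<dots> = gamma2 / 2" unfolding \<delta>_def using g2 by (simp add: field_simps)
        finally show ?thesis .
      qed
    qed
    ultimately show "dfun P s \<le> 1 + (gamma2 - 1) / 2 + c * s powr (-eps)"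
      using dform[OF sb] unfolding c_def by (simp add: mult_ac)
  qed
qed


theorem mainTheorem20:
  fixes P calP1 calP2 :: "real \<Rightarrow> real"
    and rho_lo kappa1 gamma1 Clo rho0 kappa2 gamma2 Chi eps :: real
  assumes hP1: "P1 P"
    and hP2: "P2 P rho_lo kappa1 gamma1 Clo calP1"
    and hP3: "P3 P rho0 kappa2 gamma2 Chi calP2 eps gamma1"
    and hrho0: "rho_lo < rho0"
  shows "\<exists>R. \<forall>rho_hi \<ge> R.
    (\<forall>(\<theta>::real) (x::real \<Rightarrow> real) (C::real).
       0 \<le> \<theta> \<and> 0 < C \<and>
       set_borel_measurable lborel {0..} x \<and>
       (\<forall>t\<ge>0. 0 \<le> x t) \<and>
       (\<forall>t\<ge>0. set_integrable lborel {0..t} x) \<and>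
       (\<forall>t\<ge>rho_hi. x t \<le> C * t powr \<theta>
            + (1 / t) * (LINT s:{0..t}|lborel. dfun P s * x s))
       \<longrightarrow> (\<exists>Ct>0. \<forall>t\<ge>rho_hi.
              (\<theta> < (gamma2 - 1) / 2 \<longrightarrow> x t \<le> Ct * t powr ((gamma2 - 1) / 2)) \<and>
              (\<theta> = (gamma2 - 1) / 2 \<longrightarrow> x t \<le> Ct * t powr ((gamma2 - 1) / 2) * ln t) \<and>
              (\<theta> > (gamma2 - 1) / 2 \<longrightarrow> x t \<le> Ct * t powr \<theta>))) \<and>
    (\<forall>(\<theta>::real) (x::real \<Rightarrow> real) (C::real).
       (gamma2 - 1) / 2 < \<theta> \<and> 0 < C \<and>
       set_borel_measurable lborel {0..} x \<and>
       (\<forall>t\<ge>0. 0 \<le> x t) \<and>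
       (\<forall>t\<ge>0. set_integrable lborel {0..t} x) \<and>
       (\<forall>t\<ge>rho_hi. x t \<le> C * t powr \<theta> * ln t
            + (1 / t) * (LINT s:{0..t}|lborel. dfun P s * x s))
       \<longrightarrow> (\<exists>Ct>0. \<forall>t\<ge>rho_hi. x t \<le> Ct * t powr \<theta> * ln t))"
proof -
  obtain R0 c where c: "0 \<le> c" and dle: "\<And>s. s \<ge> R0 \<Longrightarrow> dfun P s \<le> 1 + (gamma2 - 1) / 2 + c * s powr (-eps)"
    using d_bound'[OF hP1 hP2 hP3 hrho0] by blast
  define a where "a = (gamma2 - 1) / 2"
  have a: "0 \<le> a" using hP3 unfolding P3_def a_def by simp
  have eps: "0 < eps" using hP3 unfolding P3_def by simp
  have e1: "1 \<le> exp (1::real)" by simp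
  show ?thesis
  proof (rule exI[of _ "max R0 (exp 1)"], rule allI, rule impI, rule conjI)
    fix R assume R: "max R0 (exp 1) \<le> R"
    have Re: "exp 1 \<le> R" and R1: "1 \<le> R" and R0: "0 < R" and RR0: "R0 \<le> R" using R e1 by linarith+
    define D where "D = (\<lambda>s::real. 1 + a + c * s powr (-eps))"
    have Dc: "continuous_on {R..} D" unfolding D_def
      by (rule continuous_at_imp_continuous_on) (use R0 in \<open>auto intro!: continuous_intros\<close>)
    have Dnn: "0 \<le> D s" for s unfolding D_def using a c by simp
    have dleD: "dfun P s \<le> D s" if "s \<ge> R" for s using dle[of s] that RR0 unfolding D_def a_def by simp
    have xint': "set_integrable lborel {R..t} x" if "\<forall>t\<ge>0. set_integrable lborel {0..t} x" "t \<ge> R" for x :: "real \<Rightarrow> real" and t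
    proof -
      have "set_integrable lborel {0..t} x" using that R0 by auto
      then show ?thesis by (rule set_integrable_subset) (use R0 in auto)
    qed
    show "\<forall>\<theta> x C. 0 \<le> \<theta> \<and> 0 < C \<and> set_borel_measurable lborel {0..} x \<and> (\<forall>t\<ge>0. 0 \<le> x t) \<and>
       (\<forall>t\<ge>0. set_integrable lborel {0..t} x) \<and>
       (\<forall>t\<ge>R. x t \<le> C * t powr \<theta> + 1 / t * (LINT s:{0..t}|lborel. dfun P s * x s)) \<longrightarrow>
       (\<exists>Ct>0. \<forall>t\<ge>R. (\<theta> < (gamma2 - 1) / 2 \<longrightarrow> x t \<le> Ct * t powr ((gamma2 - 1) / 2)) \<and>
                  (\<theta> = (gamma2 - 1) / 2 \<longrightarrow> x t \<le> Ct * t powr ((gamma2 - 1) / 2) * ln t) \<and>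
                  ((gamma2 - 1) / 2 < \<theta> \<longrightarrow> x t \<le> Ct * t powr \<theta>))"
    proof (intro allI impI, elim conjE)
      fix \<theta> C and x :: "real \<Rightarrow> real"
      assume th: "0 \<le> \<theta>" and C: "0 < C" and xnn: "\<forall>t\<ge>0. 0 \<le> x t"
        and xint: "\<forall>t\<ge>0. set_integrable lborel {0..t} x"
        and hyp: "\<forall>t\<ge>R. x t \<le> C * t powr \<theta> + 1 / t * (LINT s:{0..t}|lborel. dfun P s * x s)"
      define K where "K = \<bar>LINT s:{0..<R}|lborel. dfun P s * x s\<bar>"
      have K: "0 \<le> K" unfolding K_def by simp
      have hx: "x t \<le> C * t powr \<theta> + K/t + (1/t) * (LINT s:{R..t}|lborel. (1 + a + c * s powr (-eps)) * x s)"
        if "t \<ge> R" for t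
        using reduce[OF R0 xnn xint dleD Dc Dnn hyp that] unfolding K_def D_def .
      have xnn': "0 \<le> x t" if "t \<ge> R" for t using xnn that R0 by simp
      have xi: "set_integrable lborel {R..t} x" if "t \<ge> R" for t using xint' xint that by blast
      consider "\<theta> < a" | "\<theta> = a" | "a < \<theta>" by linarith
      then show "\<exists>Ct>0. \<forall>t\<ge>R. (\<theta> < (gamma2 - 1) / 2 \<longrightarrow> x t \<le> Ct * t powr ((gamma2 - 1) / 2)) \<and>
                  (\<theta> = (gamma2 - 1) / 2 \<longrightarrow> x t \<le> Ct * t powr ((gamma2 - 1) / 2) * ln t) \<and>
                  ((gamma2 - 1) / 2 < \<theta> \<longrightarrow> x t \<le> Ct * t powr \<theta>)"
      proof cases
        case 1
        from case_lt[OF R1 eps c a K C th 1 xnn' xi hx] show ?thesis using 1 unfolding a_def by force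
      next
        case 2
        from case_eq[OF Re eps c a K C th 2 xnn' xi hx] show ?thesis using 2 unfolding a_def by force
      next
        case 3
        from case_gt[OF R1 eps c a K C 3 xnn' xi hx] show ?thesis using 3 unfolding a_def by force
      qed
    qed
    show "\<forall>\<theta> x C. (gamma2 - 1) / 2 < \<theta> \<and> 0 < C \<and> set_borel_measurable lborel {0..} x \<and> (\<forall>t\<ge>0. 0 \<le> x t) \<and>
       (\<forall>t\<ge>0. set_integrable lborel {0..t} x) \<and>
       (\<forall>t\<ge>R. x t \<le> C * t powr \<theta> * ln t + 1 / t * (LINT s:{0..t}|lborel. dfun P s * x s)) \<longrightarrow>
       (\<exists>Ct>0. \<forall>t\<ge>R. x t \<le> Ct * t powr \<theta> * ln t)"
    proof (intro allI impI, elim conjE)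
      fix \<theta> C and x :: "real \<Rightarrow> real"
      assume th: "(gamma2 - 1) / 2 < \<theta>" and C: "0 < C" and xnn: "\<forall>t\<ge>0. 0 \<le> x t"
        and xint: "\<forall>t\<ge>0. set_integrable lborel {0..t} x"
        and hyp: "\<forall>t\<ge>R. x t \<le> C * t powr \<theta> * ln t + 1 / t * (LINT s:{0..t}|lborel. dfun P s * x s)"
      define K where "K = \<bar>LINT s:{0..<R}|lborel. dfun P s * x s\<bar>"
      have K: "0 \<le> K" unfolding K_def by simp
      have hx: "x t \<le> C * t powr \<theta> * ln t + K/t + (1/t) * (LINT s:{R..t}|lborel. (1 + a + c * s powr (-eps)) * x s)"
        if "t \<ge> R" for t
        using reduce[OF R0 xnn xint dleD Dc Dnn hyp that] unfolding K_def D_def .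
      have xnn': "0 \<le> x t" if "t \<ge> R" for t using xnn that R0 by simp
      have xi: "set_integrable lborel {R..t} x" if "t \<ge> R" for t using xint' xint that by blast
      show "\<exists>Ct>0. \<forall>t\<ge>R. x t \<le> Ct * t powr \<theta> * ln t"
        using case_log[OF Re eps c a K C th[folded a_def] xnn' xi hx] .
    qed
  qed
qed


end
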